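(* Let $n\ge 1$ and $m\ge 0$ be integers and let $Y_{n,m}$ be the Yoke graph. Then: (1) If $n=1$, then $\operatorname{diam}(Y_{n,m})=\binom{\lceil m/2\rceil+1}{2}+\binom{\lfloor m/2\rfloor+1}{2}$. (2) If $0\le m\le n$, then $\operatorname{diam}(Y_{n,m})=\lfloor n(m+1)/2\rfloor$. (3) If $2\le n\le m$, let $d_0=\binom{\lfloor (m+n)/2\rfloor+1}{2}+\binom{\lceil (m-n)/2\rceil+1}{2}$. Then (a) if either $2\mid (m-n)$ or $n\le \lceil (m+1)/2\rceil$, then $\operatorname{diam}(Y_{n,m})=d_0$; (b) otherwise $\operatorname{diam}(Y_{n,m})=d_0+n-\lceil (m+1)/2\rceil$.
   Context: For integers $n\ge1$, $m\ge0$, the Yoke graph $Y_{n,m}$ is the simple graph whose vertices are the tuples $v=(v_0,v_1,\dots,v_m,v_{m+1})$ with $v_0,v_{m+1}\in\mathbb{Z}_n$ (the "buckets"), $v_1,\dots,v_m\in\{0,1\}$, and $\sum_{i=0}^{m+1}v_i\equiv 0\pmod n$ (each bucket identified with its least non-negative representative). Two vertices $u,v$ are adjacent iff there is $0\le i\le m$ such that $u_j=v_j$ for all $j\notin\{i,i+1\}$ and either ($u_i=v_i+1$ and $u_{i+1}=v_{i+1}-1$) or ($u_i=v_i-1$ and $u_{i+1}=v_{i+1}+1$), where bucket entries are computed modulo $n$. The diameter is the maximum graph distance between two vertices. *)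

theory Defs
  imports Main "HOL-Library.Extended_Nat"
begin

text \<open>Vertices of the Yoke graph Y_{n,m} are represented as integer lists
  v = [v_0, v_1, ..., v_m, v_{m+1}] of length m+2. Positions 0 and m+1 are the
  buckets (values in Z_n, stored by least non-negative representative, i.e. in
  {0..<n}); positions 1..m hold values in {0,1}.\<close>

definition is_bucket :: "nat \<Rightarrow> nat \<Rightarrow> bool" where
  "is_bucket m j \<longleftrightarrow> j = 0 \<or> j = m + 1"

definition yoke_vertices :: "nat \<Rightarrow> nat \<Rightarrow> int list set" where
  "yoke_vertices n m = {v. length v = m + 2
      \<and> (\<forall>j < m + 2. if is_bucket m j then 0 \<le> v ! j \<and> v ! j < int n
                                   else v ! j \<in> {0, 1})
      \<and> sum_list v mod int n = 0}"

definition entry_eq :: "nat \<Rightarrow> nat \<Rightarrow> nat \<Rightarrow> int \<Rightarrow> int \<Rightarrow> bool" where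
  "entry_eq n m j a b \<longleftrightarrow> (if is_bucket m j then a mod int n = b mod int n else a = b)"

definition yoke_adj :: "nat \<Rightarrow> nat \<Rightarrow> int list \<Rightarrow> int list \<Rightarrow> bool" where
  "yoke_adj n m u v \<longleftrightarrow> u \<in> yoke_vertices n m \<and> v \<in> yoke_vertices n m \<and> u \<noteq> v \<and>
     (\<exists>i \<le> m. (\<forall>j < m + 2. j \<noteq> i \<and> j \<noteq> i + 1 \<longrightarrow> u ! j = v ! j) \<and>
        ((entry_eq n m i (u ! i) (v ! i + 1) \<and> entry_eq n m (i+1) (u ! (i+1)) (v ! (i+1) - 1)) \<or>
         (entry_eq n m i (u ! i) (v ! i - 1) \<and> entry_eq n m (i+1) (u ! (i+1)) (v ! (i+1) + 1))))"

definition yoke_edges :: "nat \<Rightarrow> nat \<Rightarrow> (int list \<times> int list) set" where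
  "yoke_edges n m = {(u, v). yoke_adj n m u v}"

definition yoke_dist :: "nat \<Rightarrow> nat \<Rightarrow> int list \<Rightarrow> int list \<Rightarrow> enat" where
  "yoke_dist n m u v = (INF k \<in> {k::nat. (u, v) \<in> (yoke_edges n m) ^^ k}. enat k)"

definition yoke_diam :: "nat \<Rightarrow> nat \<Rightarrow> enat" where
  "yoke_diam n m = (SUP u \<in> yoke_vertices n m. SUP v \<in> yoke_vertices n m. yoke_dist n m u v)"

end

theory Submission
  imports Defs
begin


definition walk :: "(nat \<Rightarrow> int) \<Rightarrow> nat \<Rightarrow> bool" where
  "walk s m \<longleftrightarrow> (\<forall>j<m. \<bar>s (Suc j) - s j\<bar> \<le> 1)"

definition phi :: "(nat \<Rightarrow> int) \<Rightarrow> nat \<Rightarrow> int \<Rightarrow> int" where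
  "phi s m t = (\<Sum>j\<le>m. \<bar>t - s j\<bar>)"

lemma walk_ivt_aux:
  assumes w: "walk s m" and ij: "i \<le> j" "j \<le> m"
  shows "min (s i) (s j) \<le> y \<Longrightarrow> y \<le> max (s i) (s j) \<Longrightarrow> \<exists>l. i \<le> l \<and> l \<le> j \<and> s l = y"
  using ij
proof (induction j arbitrary: y)
  case 0
  then show ?case by auto
next
  case (Suc j)
  show ?case
  proof (cases "i = Suc j")
    case True
    then show ?thesis using Suc.prems by auto
  next
    case False
    then have ij': "i \<le> j" "j \<le> m" using Suc.prems by auto
    have step: "\<bar>s (Suc j) - s j\<bar> \<le> 1" using w Suc.prems unfolding walk_def by auto
    show ?thesis
    proof (cases "min (s i) (s j) \<le> y \<and> y \<le> max (s i) (s j)")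
      case True
      then obtain l where "i \<le> l" "l \<le> j" "s l = y" using Suc.IH ij' by blast
      then show ?thesis by (intro exI[of _ l]) auto
    next
      case False
      then have "y = s j \<or> y = s (Suc j)" using Suc.prems step by (auto simp: abs_le_iff)
      then show ?thesis using ij' by (metis le_SucI order_refl Suc.prems(3))
    qed
  qed
qed

lemma walk_ivt:
  assumes w: "walk s m" and "i \<le> m" "j \<le> m" "s i \<le> y" "y \<le> s j"
  shows "\<exists>l\<le>m. s l = y"
proof (cases "i \<le> j")
  case True
  then obtain l where "i \<le> l" "l \<le> j" "s l = y" using walk_ivt_aux[OF w True assms(3), of y] assms by auto
  then show ?thesis using assms by (intro exI[of _ l]) auto
next
  case False
  then have "j \<le> i" by simp
  then obtain l where "j \<le> l" "l \<le> i" "s l = y" using walk_ivt_aux[OF w _ assms(2), of j y] assms by auto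
  then show ?thesis using assms by (intro exI[of _ l]) auto
qed

lemma walk_neg: "walk s m \<Longrightarrow> walk (\<lambda>j. - s j) m"
  unfolding walk_def abs_le_iff by auto

lemma walk_bound: "walk s m \<Longrightarrow> j \<le> m \<Longrightarrow> \<bar>s j - s 0\<bar> \<le> int j"
proof (induction j)
  case 0 then show ?case by simp
next
  case (Suc j)
  then have "\<bar>s (Suc j) - s j\<bar> \<le> 1" unfolding walk_def by auto
  then show ?case using Suc by auto
qed

lemma triL_aux:
  assumes w: "walk s m"
  shows "card {j. j \<le> m \<and> s j < a} = c \<Longrightarrow> (\<exists>j\<le>m. a \<le> s j) \<Longrightarrow>
     2 * (\<Sum>j\<in>{j. j \<le> m \<and> s j < a}. (a - s j)) \<le> int c * (int c + 1)"
proof (induction c arbitrary: a rule: less_induct)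
  case (less c)
  define A where "A = {j. j \<le> m \<and> s j < a}"
  define B where "B = {j. j \<le> m \<and> s j < a - 1}"
  have fA: "finite A" unfolding A_def by auto
  have BA: "B \<subseteq> A" unfolding A_def B_def by auto
  have sumA: "(\<Sum>j\<in>A. (a - s j)) = int c + (\<Sum>j\<in>B. ((a - 1) - s j))"
  proof -
    have "(\<Sum>j\<in>A. (a - s j)) = (\<Sum>j\<in>A. (1::int)) + (\<Sum>j\<in>A. ((a - 1) - s j))"
      by (subst sum.distrib[symmetric]) simp
    also have "(\<Sum>j\<in>A. (1::int)) = int (card A)" by simp
    also have "(\<Sum>j\<in>A. ((a - 1) - s j)) = (\<Sum>j\<in>B. ((a - 1) - s j)) + (\<Sum>j\<in>A - B. ((a - 1) - s j))"
      using fA BA by (metis add.commute sum.subset_diff)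
    also have "(\<Sum>j\<in>A - B. ((a - 1) - s j)) = 0"
      by (rule sum.neutral) (auto simp: A_def B_def)
    finally show ?thesis using less.prems(1) A_def by simp
  qed
  show ?case
  proof (cases "c = 0")
    case True
    then have "{j. j \<le> m \<and> s j < a} = {}" using less.prems(1) fA unfolding A_def by auto
    then have "(\<Sum>j\<in>{j. j \<le> m \<and> s j < a}. (a - s j)) = 0" by (simp only: sum.empty)
    then show ?thesis using True by simp
  next
    case False
    then obtain j0 where j0: "j0 \<le> m" "s j0 < a" using less.prems(1) by (metis (mono_tags, lifting) card.empty empty_Collect_eq)
    obtain j1 where j1: "j1 \<le> m" "a \<le> s j1" using less.prems(2) by auto
    obtain l where l: "l \<le> m" "s l = a - 1" using walk_ivt[OF w j0(1) j1(1), of "a - 1"] j0 j1 by auto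
    have lAB: "l \<in> A - B" using l unfolding A_def B_def by auto
    have cB: "card B < c"
    proof -
      have "B \<subset> A" using BA lAB by auto
      then have "card B < card A" using fA by (simp add: psubset_card_mono)
      then show ?thesis using less.prems(1) unfolding A_def by simp
    qed
    have IH: "2 * (\<Sum>j\<in>B. ((a - 1) - s j)) \<le> int (card B) * (int (card B) + 1)"
      using less.IH[OF cB, of "a - 1"] j1 unfolding B_def by force
    have "int (card B) * (int (card B) + 1) \<le> (int c - 1) * int c"
    proof -
      have "int (card B) \<le> int c - 1" using cB by simp
      moreover have "0 \<le> int (card B)" by simp
      ultimately show ?thesis by (simp add: mult_mono)
    qed
    then show ?thesis using sumA IH A_def by (simp add: algebra_simps)
  qed
qed

lemma triL:
  assumes "walk s m" "\<exists>j\<le>m. a \<le> s j"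
  shows "2 * (\<Sum>j\<in>{j. j \<le> m \<and> s j < a}. (a - s j))
           \<le> int (card {j. j \<le> m \<and> s j < a}) * (int (card {j. j \<le> m \<and> s j < a}) + 1)"
  using triL_aux[OF assms(1) refl assms(2)] .

lemma triR:
  assumes w: "walk s m" and ex: "\<exists>j\<le>m. s j \<le> b"
  shows "2 * (\<Sum>j\<in>{j. j \<le> m \<and> b < s j}. (s j - b))
           \<le> int (card {j. j \<le> m \<and> b < s j}) * (int (card {j. j \<le> m \<and> b < s j}) + 1)"
proof -
  have "\<exists>j\<le>m. - b \<le> - s j" using ex by auto
  from triL[OF walk_neg[OF w] this]
  show ?thesis by (simp add: algebra_simps)
qed

definition Fc :: "(nat \<Rightarrow> int) \<Rightarrow> nat \<Rightarrow> int \<Rightarrow> nat" where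
  "Fc s m y = card {j. j \<le> m \<and> s j \<le> y}"

lemma Fc_le: "Fc s m y \<le> Suc m"
proof -
  have "{j. j \<le> m \<and> s j \<le> y} \<subseteq> {..m}" by auto
  then have "card {j. j \<le> m \<and> s j \<le> y} \<le> card {..m}" by (rule card_mono[OF finite_atMost])
  then show ?thesis unfolding Fc_def by simp
qed

lemma point_diff:
  "\<bar>a - x\<bar> - \<bar>(a + int T) - x\<bar> = (\<Sum>i<T. if x \<le> a + int i then -1 else (1::int))"
proof (induction T)
  case 0 then show ?case by simp
next
  case (Suc T)
  have "\<bar>(a + int T) - x\<bar> - \<bar>(a + int (Suc T)) - x\<bar> = (if x \<le> a + int T then -1 else 1)"
    by auto
  then show ?case using Suc by simp
qed

lemma sum_ind_card: "(\<Sum>j\<le>(m::nat). (if P j then (1::int) else 0)) = int (card {j. j \<le> m \<and> P j})"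
proof -
  have "(\<Sum>j\<le>m. (if P j then (1::int) else 0)) = (\<Sum>j\<in>{..m} \<inter> {x. P x}. 1) + (\<Sum>j\<in>{..m} \<inter> - {x. P x}. 0)"
    by (rule sum.If_cases) simp
  moreover have "{..m} \<inter> {x. P x} = {j. j \<le> m \<and> P j}" by auto
  ultimately show ?thesis by simp
qed

lemma sum_sign_card:
  "(\<Sum>j\<le>(m::nat). (if P j then -1 else (1::int))) = int (Suc m) - 2 * int (card {j. j \<le> m \<and> P j})"
proof -
  have "(\<Sum>j\<le>m. (if P j then -1 else (1::int))) = (\<Sum>j\<le>m. (1 - 2 * (if P j then 1 else 0)))"
    by (intro sum.cong) auto
  also have "\<dots> = (\<Sum>j\<le>m. (1::int)) - 2 * (\<Sum>j\<le>m. (if P j then (1::int) else 0))"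
    by (simp add: sum_subtractf sum_distrib_left)
  finally show ?thesis by (simp add: sum_ind_card)
qed

lemma phi_diff:
  "phi s m a - phi s m (a + int T) = (\<Sum>i<T. int (Suc m) - 2 * int (Fc s m (a + int i)))"
proof -
  have "phi s m a - phi s m (a + int T) = (\<Sum>j\<le>m. \<bar>a - s j\<bar> - \<bar>(a + int T) - s j\<bar>)"
    unfolding phi_def by (simp add: sum_subtractf)
  also have "\<dots> = (\<Sum>j\<le>m. \<Sum>i<T. if s j \<le> a + int i then -1 else (1::int))"
    by (simp only: point_diff)
  also have "\<dots> = (\<Sum>i<T. \<Sum>j\<le>m. if s j \<le> a + int i then -1 else (1::int))"
    by (rule sum.swap)
  also have "\<dots> = (\<Sum>i<T. int (Suc m) - 2 * int (Fc s m (a + int i)))"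
    by (simp only: sum_sign_card Fc_def)
  finally show ?thesis .
qed

lemma Fc_grow:
  assumes w: "walk s m" and ex: "\<exists>j\<le>m. s j < a"
  shows "min (card {j. j \<le> m \<and> s j < a} + d) (Suc m) \<le> Fc s m (a - 1 + int d)"
proof (induction d)
  case 0
  have "{j. j \<le> m \<and> s j < a} = {j. j \<le> m \<and> s j \<le> a - 1}" by auto
  then show ?case unfolding Fc_def by simp
next
  case (Suc d)
  define y where "y = a - 1 + int d"
  have mono: "Fc s m y \<le> Fc s m (y + 1)"
    unfolding Fc_def by (intro card_mono) auto
  show ?case
  proof (cases "Fc s m y = Suc m")
    case True
    then show ?thesis using mono y_def by (simp add: add.assoc)
  next
    case False
    then have lt: "Fc s m y < Suc m" using Fc_le[of s m y] by simp
    have "\<exists>j\<le>m. y < s j"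
    proof (rule ccontr)
      assume "\<not> (\<exists>j\<le>m. y < s j)"
      then have "{j. j \<le> m \<and> s j \<le> y} = {..m}" by force
      then show False using lt unfolding Fc_def by simp
    qed
    then obtain j1 where j1: "j1 \<le> m" "y + 1 \<le> s j1" by auto
    obtain j0 where j0: "j0 \<le> m" "s j0 < a" using ex by auto
    have "s j0 \<le> y + 1" using j0 y_def by simp
    then obtain l where l: "l \<le> m" "s l = y + 1" using walk_ivt[OF w j0(1) j1(1)] j1 by blast
    have l1: "l \<in> {j. j \<le> m \<and> s j \<le> y + 1}" "l \<notin> {j. j \<le> m \<and> s j \<le> y}" using l by auto
    have "{j. j \<le> m \<and> s j \<le> y} \<subseteq> {j. j \<le> m \<and> s j \<le> y + 1}" by auto
    then have "{j. j \<le> m \<and> s j \<le> y} \<subset> {j. j \<le> m \<and> s j \<le> y + 1}" using l1 by blast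
    then have "Fc s m y < Fc s m (y + 1)" unfolding Fc_def by (intro psubset_card_mono) auto
    then show ?thesis using Suc.IH y_def by (simp add: add.assoc)
  qed
qed

lemma sum_bnd:
  fixes k :: int
  shows "(\<Sum>i<T. (if int i < k then k - 2 - 2 * int i else -1)) = (if int T \<le> k then int T * (k - 1 - int T) else - int T)"
proof (induction T)
  case 0 then show ?case by simp
next
  case (Suc T)
  then show ?case by (auto simp: algebra_simps)
qed

lemma bal:
  assumes w: "walk s m" and T: "1 \<le> T"
    and c1: "1 \<le> card {j. j \<le> m \<and> s j < a}"
    and ck: "int (Suc m) - 2 * int (card {j. j \<le> m \<and> s j < a}) \<le> int T"
  shows "phi s m a - phi s m (a + int T) \<le> - int T"
proof -
  define c where "c = card {j. j \<le> m \<and> s j < a}"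
  define k where "k = int (Suc m) - 2 * int c"
  have ex: "\<exists>j\<le>m. s j < a"
  proof (rule ccontr)
    assume "\<not> ?thesis"
    then have e: "{j. j \<le> m \<and> s j < a} = {}" by auto
    show False using c1 unfolding e by simp
  qed
  have tm: "int (Suc m) - 2 * int (Fc s m (a + int i)) \<le> (if int i < k then k - 2 - 2 * int i else -1)" for i
  proof -
    have g: "min (c + Suc i) (Suc m) \<le> Fc s m (a + int i)"
      using Fc_grow[OF w ex, of "Suc i"] unfolding c_def by simp
    show ?thesis
    proof (cases "int i < k")
      case True
      then have "c + Suc i \<le> Suc m" using k_def by simp
      then have "c + Suc i \<le> Fc s m (a + int i)" using g by simp
      then show ?thesis using True k_def by simp
    next
      case False
      have "int (Suc m) + 1 \<le> 2 * int (Fc s m (a + int i))"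
      proof (cases "c + Suc i \<le> Suc m")
        case True
        then have "c + Suc i \<le> Fc s m (a + int i)" using g by simp
        then show ?thesis using False k_def by linarith
      next
        case False
        then have "Suc m \<le> Fc s m (a + int i)" using g by simp
        then show ?thesis by linarith
      qed
      then show ?thesis using False by simp
    qed
  qed
  have "phi s m a - phi s m (a + int T) \<le> (\<Sum>i<T. (if int i < k then k - 2 - 2 * int i else -1))"
    unfolding phi_diff by (intro sum_mono tm)
  also have "\<dots> = (if int T \<le> k then int T * (k - 1 - int T) else - int T)"
    by (rule sum_bnd)
  also have "\<dots> = - int T"
  proof -
    have "k \<le> int T" using ck k_def c_def by simp
    then show ?thesis by (cases "int T \<le> k") (simp_all add: algebra_simps)
  qed
  finally show ?thesis .
qed

lemma int_ivt:
  fixes g :: "int \<Rightarrow> int"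
  shows "lo \<le> hi \<Longrightarrow> g lo \<le> 0 \<Longrightarrow> 0 < g hi \<Longrightarrow> \<exists>a. lo \<le> a \<and> a < hi \<and> g a \<le> 0 \<and> 0 < g (a + 1)"
proof (induction "nat (hi - lo)" arbitrary: lo)
  case 0
  then have "lo = hi" by simp
  then show ?case using 0 by simp
next
  case (Suc k)
  show ?case
  proof (cases "g (lo + 1) \<le> 0")
    case True
    have "k = nat (hi - (lo + 1))" using Suc.hyps by simp
    moreover have "lo + 1 \<le> hi" using Suc.hyps by simp
    ultimately obtain a where "lo + 1 \<le> a" "a < hi" "g a \<le> 0" "0 < g (a + 1)"
      using Suc.hyps(1)[of "lo + 1"] True Suc.prems by blast
    then show ?thesis by (intro exI[of _ a]) auto
  next
    case False
    then show ?thesis using Suc.prems Suc.hyps by (intro exI[of _ lo]) auto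
  qed
qed

lemma sum_if_filter: "(\<Sum>j\<le>(m::nat). (if P j then f j else (0::int))) = (\<Sum>j\<in>{j. j \<le> m \<and> P j}. f j)"
proof -
  have "(\<Sum>j\<le>m. (if P j then f j else (0::int))) = (\<Sum>j\<in>{..m} \<inter> {x. P x}. f j) + (\<Sum>j\<in>{..m} \<inter> - {x. P x}. 0)"
    by (rule sum.If_cases) simp
  moreover have "{..m} \<inter> {x. P x} = {j. j \<le> m \<and> P j}" by auto
  ultimately show ?thesis by simp
qed

lemma phi_neg: "phi (\<lambda>j. - s j) m t = phi s m (- t)"
  unfolding phi_def by (intro sum.cong) auto

lemma phi_split:
  "phi s m a = (\<Sum>j\<in>{j. j \<le> m \<and> s j < a}. (a - s j)) + (\<Sum>j\<in>{j. j \<le> m \<and> a < s j}. (s j - a))"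
proof -
  have "phi s m a = (\<Sum>j\<le>m. (if s j < a then a - s j else 0) + (if a < s j then s j - a else 0))"
    unfolding phi_def by (intro sum.cong) auto
  also have "\<dots> = (\<Sum>j\<le>m. (if s j < a then a - s j else 0)) + (\<Sum>j\<le>m. (if a < s j then s j - a else 0))"
    by (rule sum.distrib)
  finally show ?thesis by (simp only: sum_if_filter)
qed

lemma phi_pair:
  assumes "0 \<le> d"
  shows "phi s m a + phi s m (a + d) = int (Suc m) * d + 2 * (\<Sum>j\<in>{j. j \<le> m \<and> s j < a}. (a - s j))
          + 2 * (\<Sum>j\<in>{j. j \<le> m \<and> a + d < s j}. (s j - (a + d)))"
proof -
  have "phi s m a + phi s m (a + d) = (\<Sum>j\<le>m. d + 2 * (if s j < a then a - s j else 0) + 2 * (if a + d < s j then s j - (a + d) else 0))"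
    unfolding phi_def sum.distrib[symmetric] using assms by (intro sum.cong) auto
  also have "\<dots> = (\<Sum>j\<le>m. d) + 2 * (\<Sum>j\<le>m. (if s j < a then a - s j else 0)) + 2 * (\<Sum>j\<le>m. (if a + d < s j then s j - (a + d) else 0))"
    by (simp add: sum.distrib sum_distrib_left)
  finally show ?thesis by (simp only: sum_if_filter) simp
qed

lemma lam_bound:
  assumes w: "walk s m" and c1: "1 \<le> card {j. j \<le> m \<and> s j < a}" and c2: "card {j. j \<le> m \<and> s j < a} \<le> m"
  shows "2 * phi s m a \<le> int (card {j. j \<le> m \<and> s j < a}) * (int (card {j. j \<le> m \<and> s j < a}) + 1)
          + (int m - int (card {j. j \<le> m \<and> s j < a})) * (int m - int (card {j. j \<le> m \<and> s j < a}) + 1)"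
proof -
  define A where "A = {j. j \<le> m \<and> s j < a}"
  define G where "G = {j. j \<le> m \<and> a < s j}"
  have ex0: "\<exists>j\<le>m. s j < a"
  proof (rule ccontr)
    assume "\<not> ?thesis"
    then have e: "A = {}" unfolding A_def by auto
    show False using c1 unfolding A_def[symmetric] e by simp
  qed
  have ex1: "\<exists>j\<le>m. a \<le> s j"
  proof (rule ccontr)
    assume "\<not> ?thesis"
    then have "A = {..m}" unfolding A_def by force
    then show False using c2 unfolding A_def[symmetric] by simp
  qed
  obtain j0 where j0: "j0 \<le> m" "s j0 < a" using ex0 by auto
  obtain j1 where j1: "j1 \<le> m" "a \<le> s j1" using ex1 by auto
  obtain l where l: "l \<le> m" "s l = a" using walk_ivt[OF w j0(1) j1(1), of a] j0 j1 by auto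
  have ex2: "\<exists>j\<le>m. s j \<le> a" using l by auto
  have cardAG: "card A + card G \<le> m"
  proof -
    have "A \<union> G \<subseteq> {..m} - {l}" using l unfolding A_def G_def by auto
    then have "card (A \<union> G) \<le> card ({..m} - {l})" by (intro card_mono) auto
    moreover have "card (A \<union> G) = card A + card G"
      by (rule card_Un_disjoint) (auto simp: A_def G_def)
    moreover have "card ({..m} - {l}) = m" using l by simp
    ultimately show ?thesis by simp
  qed
  have hL: "2 * (\<Sum>j\<in>A. (a - s j)) \<le> int (card A) * (int (card A) + 1)"
    using triL[OF w ex1] unfolding A_def .
  have hG: "2 * (\<Sum>j\<in>G. (s j - a)) \<le> int (card G) * (int (card G) + 1)"
    using triR[OF w ex2] unfolding G_def .
  have "int (card G) * (int (card G) + 1) \<le> (int m - int (card A)) * (int m - int (card A) + 1)"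
  proof -
    have "int (card G) \<le> int m - int (card A)" using cardAG by simp
    then show ?thesis by (intro mult_mono) auto
  qed
  then show ?thesis using hL hG phi_split[of s m a] unfolding A_def G_def by linarith
qed

lemma Fc_zero: "(\<And>j. j \<le> m \<Longrightarrow> y < s j) \<Longrightarrow> Fc s m y = 0"
  unfolding Fc_def by (metis (mono_tags, lifting) card.empty empty_Collect_eq not_le)

lemma Fc_full: "(\<And>j. j \<le> m \<Longrightarrow> s j \<le> y) \<Longrightarrow> Fc s m y = Suc m"
proof -
  assume "\<And>j. j \<le> m \<Longrightarrow> s j \<le> y"
  then have "{j. j \<le> m \<and> s j \<le> y} = {..m}" by auto
  then show ?thesis unfolding Fc_def by simp
qed

lemma card_lt_le: "card {j. j \<le> m \<and> P j} \<le> Suc m"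
proof -
  have "card {j. j \<le> m \<and> P j} \<le> card {..m}" by (rule card_mono[OF finite_atMost]) auto
  then show ?thesis by simp
qed

lemma key:
  assumes w: "walk s m" and n2: "2 \<le> n"
  shows "\<exists>a. phi s m (a + int (n - 1)) \<le> phi s m a \<and> phi s m (a + 1) \<le> phi s m (a + int n) \<and>
    (card {j. j \<le> m \<and> s j < a} = 0 \<or> int n \<le> int (Suc m) - 2 * int (card {j. j \<le> m \<and> s j < a})) \<and>
    (card {j. j \<le> m \<and> a + int n < s j} = 0 \<or> int n \<le> int (Suc m) - 2 * int (card {j. j \<le> m \<and> a + int n < s j})) \<and>
    phi s m a + phi s m (a + int n) \<le> int n * int (Suc m)
       + int (card {j. j \<le> m \<and> s j < a}) * (int (card {j. j \<le> m \<and> s j < a}) + 1)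
       + int (card {j. j \<le> m \<and> a + int n < s j}) * (int (card {j. j \<le> m \<and> a + int n < s j}) + 1) \<and>
    (1 \<le> card {j. j \<le> m \<and> s j < a} \<and> 2 * card {j. j \<le> m \<and> s j < a} + n = Suc m \<longrightarrow>
       2 * phi s m a \<le> int (card {j. j \<le> m \<and> s j < a}) * (int (card {j. j \<le> m \<and> s j < a}) + 1)
          + (int m - int (card {j. j \<le> m \<and> s j < a})) * (int m - int (card {j. j \<le> m \<and> s j < a}) + 1)) \<and>
    (1 \<le> card {j. j \<le> m \<and> a + int n < s j} \<and> 2 * card {j. j \<le> m \<and> a + int n < s j} + n = Suc m \<longrightarrow>
       2 * phi s m (a + int n) \<le> int (card {j. j \<le> m \<and> a + int n < s j}) * (int (card {j. j \<le> m \<and> a + int n < s j}) + 1)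
          + (int m - int (card {j. j \<le> m \<and> a + int n < s j})) * (int m - int (card {j. j \<le> m \<and> a + int n < s j}) + 1))"
proof -
  define T where "T = n - 1"
  have T1: "1 \<le> T" and nT: "int n = int T + 1" using n2 unfolding T_def by auto
  define g where "g a = phi s m (a + int T) - phi s m a" for a
  define lo where "lo = s 0 - int m - int T"
  define hi where "hi = s 0 + int m"
  have sb: "s 0 - int m \<le> s j \<and> s j \<le> s 0 + int m" if "j \<le> m" for j
    using walk_bound[OF w that] that by auto
  have glo: "g lo \<le> 0"
  proof -
    have "Fc s m (lo + int i) = 0" if "i < T" for i
      by (rule Fc_zero) (use sb that in \<open>force simp: lo_def\<close>)
    then have "phi s m lo - phi s m (lo + int T) = (\<Sum>i<T. int (Suc m))"
      unfolding phi_diff by (intro sum.cong) auto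
    moreover have "0 \<le> (\<Sum>i<T. int (Suc m))" by (rule sum_nonneg) simp
    ultimately show ?thesis unfolding g_def by linarith
  qed
  have ghi: "0 < g hi"
  proof -
    have "Fc s m (hi + int i) = Suc m" if "i < T" for i
      by (rule Fc_full) (use sb that in \<open>force simp: hi_def\<close>)
    then have "phi s m hi - phi s m (hi + int T) = (\<Sum>i<T. - int (Suc m))"
      unfolding phi_diff by (intro sum.cong) auto
    moreover have "(\<Sum>i<T. - int (Suc m)) < 0"
    proof -
      have "(\<Sum>i<T. - int (Suc m)) = - (int T * int (Suc m))" by (simp add: algebra_simps)
      moreover have "0 < int T * int (Suc m)" using T1 by simp
      ultimately show ?thesis by linarith
    qed
    ultimately show ?thesis unfolding g_def by linarith
  qed
  have "lo \<le> hi" unfolding lo_def hi_def by simp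
  then obtain a where a: "g a \<le> 0" "0 < g (a + 1)" using int_ivt[of lo hi g] glo ghi by blast
  have p1: "phi s m (a + int (n - 1)) \<le> phi s m a" using a(1) unfolding g_def T_def by simp
  have p2: "phi s m (a + 1) < phi s m (a + int n)"
  proof -
    have e: "a + 1 + int T = a + int n" using nT by simp
    have "phi s m (a + 1) < phi s m (a + 1 + int T)" using a(2) unfolding g_def by simp
    then show ?thesis unfolding e .
  qed
  define cL where "cL = card {j. j \<le> m \<and> s j < a}"
  define cR where "cR = card {j. j \<le> m \<and> a + int n < s j}"
  have hL: "cL = 0 \<or> int n \<le> int (Suc m) - 2 * int cL"
  proof (rule ccontr)
    assume "\<not> ?thesis"
    then have "1 \<le> cL" "int (Suc m) - 2 * int cL \<le> int T" using nT by auto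
    then have "phi s m a - phi s m (a + int T) \<le> - int T" using bal[OF w T1] unfolding cL_def by blast
    then show False using p1 T1 unfolding T_def by simp
  qed
  have cardR: "card {j. j \<le> m \<and> (\<lambda>j. - s j) j < - (a + int n)} = cR"
    unfolding cR_def by (rule arg_cong[where f=card]) auto
  have hR: "cR = 0 \<or> int n \<le> int (Suc m) - 2 * int cR"
  proof (rule ccontr)
    assume "\<not> ?thesis"
    then have "1 \<le> cR" "int (Suc m) - 2 * int cR \<le> int T" using nT by auto
    then have "phi (\<lambda>j. - s j) m (- (a + int n)) - phi (\<lambda>j. - s j) m (- (a + int n) + int T) \<le> - int T"
      using bal[OF walk_neg[OF w] T1, of "- (a + int n)"] cardR by simp
    then have "phi s m (a + int n) - phi s m (- (- (a + int n) + int T)) \<le> - int T" by (simp add: phi_neg add_ac)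
    moreover have e: "- (- (a + int n) + int T) = a + 1" using nT by simp
    ultimately have "phi s m (a + int n) - phi s m (a + 1) \<le> - int T" by metis
    then show False using p2 T1 by simp
  qed
  have cLlt: "cL < Suc m"
  proof (cases "cL = 0")
    case False
    then have "int n \<le> int (Suc m) - 2 * int cL" using hL by auto
    then show ?thesis using n2 by linarith
  qed simp
  have cRlt: "cR < Suc m"
  proof (cases "cR = 0")
    case False
    then have "int n \<le> int (Suc m) - 2 * int cR" using hR by auto
    then show ?thesis using n2 by linarith
  qed simp
  have exL: "\<exists>j\<le>m. a \<le> s j"
  proof (rule ccontr)
    assume "\<not> ?thesis"
    then have "{j. j \<le> m \<and> s j < a} = {..m}" by force
    then show False using cLlt unfolding cL_def by simp
  qed
  have exR: "\<exists>j\<le>m. s j \<le> a + int n"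
  proof (rule ccontr)
    assume "\<not> ?thesis"
    then have "{j. j \<le> m \<and> a + int n < s j} = {..m}" by force
    then show False using cRlt unfolding cR_def by simp
  qed
  have sumb: "phi s m a + phi s m (a + int n) \<le> int n * int (Suc m) + int cL * (int cL + 1) + int cR * (int cR + 1)"
    using phi_pair[of "int n" s m a] triL[OF w exL] triR[OF w exR] unfolding cL_def cR_def
    by (simp add: algebra_simps)
  have spL: "1 \<le> cL \<and> 2 * cL + n = Suc m \<longrightarrow> 2 * phi s m a \<le> int cL * (int cL + 1) + (int m - int cL) * (int m - int cL + 1)"
  proof
    assume h: "1 \<le> cL \<and> 2 * cL + n = Suc m"
    then have "cL \<le> m" using n2 by simp
    then show "2 * phi s m a \<le> int cL * (int cL + 1) + (int m - int cL) * (int m - int cL + 1)"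
      using lam_bound[OF w] h unfolding cL_def by blast
  qed
  have spR: "1 \<le> cR \<and> 2 * cR + n = Suc m \<longrightarrow> 2 * phi s m (a + int n) \<le> int cR * (int cR + 1) + (int m - int cR) * (int m - int cR + 1)"
  proof
    assume h: "1 \<le> cR \<and> 2 * cR + n = Suc m"
    then have "cR \<le> m" using n2 by simp
    then have "2 * phi (\<lambda>j. - s j) m (- (a + int n)) \<le> int cR * (int cR + 1) + (int m - int cR) * (int m - int cR + 1)"
      using lam_bound[OF walk_neg[OF w], of "- (a + int n)"] h cardR by simp
    then show "2 * phi s m (a + int n) \<le> int cR * (int cR + 1) + (int m - int cR) * (int m - int cR + 1)"
      by (simp add: phi_neg add_ac)
  qed
  show ?thesis
    apply (rule exI[of _ a])
    using p1 p2 hL hR sumb spL spR unfolding cL_def cR_def by auto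
qed

lemma convex_pt:
  fixes u v z :: int
  assumes "0 \<le> u" "0 \<le> v"
  shows "(u + v) * \<bar>z\<bar> \<le> v * \<bar>z - u\<bar> + u * \<bar>z + v\<bar>"
proof -
  have "(u + v) * \<bar>z\<bar> = \<bar>(u + v) * z\<bar>" using assms by (simp add: abs_mult)
  also have "(u + v) * z = v * (z - u) + u * (z + v)" by (simp add: algebra_simps)
  also have "\<bar>v * (z - u) + u * (z + v)\<bar> \<le> \<bar>v * (z - u)\<bar> + \<bar>u * (z + v)\<bar>" by (rule abs_triangle_ineq)
  also have "\<bar>v * (z - u)\<bar> + \<bar>u * (z + v)\<bar> = v * \<bar>z - u\<bar> + u * \<bar>z + v\<bar>" using assms by (simp add: abs_mult)
  finally show ?thesis .
qed

lemma window:
  assumes h1: "phi s m a \<le> D" and h2: "phi s m (a + int T) \<le> D"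
  shows "\<exists>t. t mod int (Suc T) = r mod int (Suc T) \<and> phi s m t \<le> D"
proof -
  define t where "t = a + (r - a) mod int (Suc T)"
  have t1: "t mod int (Suc T) = r mod int (Suc T)"
    unfolding t_def by (simp add: mod_add_right_eq)
  define u where "u = t - a"
  define v where "v = a + int T - t"
  have u0: "0 \<le> u" unfolding u_def t_def by simp
  have v0: "0 \<le> v"
  proof -
    have "(r - a) mod int (Suc T) < int (Suc T)" by (rule pos_mod_bound) simp
    then have "(r - a) mod int (Suc T) \<le> int T" by linarith
    then show ?thesis unfolding v_def t_def by simp
  qed
  have uv: "u + v = int T" unfolding u_def v_def by simp
  have pt: "int T * \<bar>t - s j\<bar> \<le> v * \<bar>a - s j\<bar> + u * \<bar>(a + int T) - s j\<bar>" for j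
  proof -
    have "(u + v) * \<bar>t - s j\<bar> \<le> v * \<bar>(t - s j) - u\<bar> + u * \<bar>(t - s j) + v\<bar>"
      by (rule convex_pt[OF u0 v0])
    moreover have "(t - s j) - u = a - s j" "(t - s j) + v = (a + int T) - s j" unfolding u_def v_def by simp_all
    ultimately show ?thesis using uv by simp
  qed
  have "int T * phi s m t \<le> v * phi s m a + u * phi s m (a + int T)"
    unfolding phi_def sum_distrib_left sum.distrib[symmetric] by (intro sum_mono pt)
  also have "\<dots> \<le> v * D + u * D" using h1 h2 u0 v0 by (intro add_mono mult_left_mono) auto
  also have "\<dots> = (u + v) * D" by (simp add: algebra_simps)
  also have "\<dots> = int T * D" using uv by simp
  finally have *: "int T * phi s m t \<le> int T * D" .
  have "phi s m t \<le> D"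
  proof (cases "T = 0")
    case True
    then have "t = a" using u0 v0 uv unfolding u_def by simp
    then show ?thesis using h1 by simp
  next
    case False
    then show ?thesis using * by simp
  qed
  then show ?thesis using t1 by blast
qed

lemma median:
  assumes w: "walk s m"
  shows "\<exists>a. 2 * phi s m a \<le> int ((m + 1) div 2) * (int ((m + 1) div 2) + 1) + int (m div 2) * (int (m div 2) + 1)"
proof -
  define g where "g a = phi s m (a + 1) - phi s m a" for a
  define lo where "lo = s 0 - int m - 1"
  define hi where "hi = s 0 + int m"
  have sb: "s 0 - int m \<le> s j \<and> s j \<le> s 0 + int m" if "j \<le> m" for j
    using walk_bound[OF w that] that by auto
  have d1: "phi s m b - phi s m (b + 1) = int (Suc m) - 2 * int (Fc s m b)" for b
    using phi_diff[of s m b 1] by simp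
  have glo: "g lo \<le> 0"
  proof -
    have "Fc s m lo = 0" by (rule Fc_zero) (use sb in \<open>force simp: lo_def\<close>)
    then show ?thesis using d1[of lo] unfolding g_def by simp
  qed
  have ghi: "0 < g hi"
  proof -
    have "Fc s m hi = Suc m" by (rule Fc_full) (use sb in \<open>force simp: hi_def\<close>)
    then show ?thesis using d1[of hi] unfolding g_def by simp
  qed
  have "lo \<le> hi" unfolding lo_def hi_def by simp
  then obtain a0 where a0: "g a0 \<le> 0" "0 < g (a0 + 1)" using int_ivt[of lo hi g] glo ghi by blast
  define a where "a = a0 + 1"
  define cL where "cL = card {j. j \<le> m \<and> s j < a}"
  define cG where "cG = card {j. j \<le> m \<and> a < s j}"
  have FcL: "Fc s m a0 = cL" unfolding Fc_def cL_def a_def by (rule arg_cong[where f=card]) auto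
  have part: "cG + Fc s m a = Suc m"
  proof -
    have "{j. j \<le> m \<and> a < s j} \<union> {j. j \<le> m \<and> s j \<le> a} = {..m}" by auto
    moreover have "card ({j. j \<le> m \<and> a < s j} \<union> {j. j \<le> m \<and> s j \<le> a}) = cG + Fc s m a"
      unfolding cG_def Fc_def by (rule card_Un_disjoint) auto
    ultimately show ?thesis by simp
  qed
  have hL: "2 * int cL \<le> int (Suc m)" using a0(1) d1[of a0] FcL unfolding g_def by simp
  have hG: "2 * int cG < int (Suc m)" using a0(2) d1[of a] part unfolding g_def a_def by simp
  have exL: "\<exists>j\<le>m. a \<le> s j"
  proof (rule ccontr)
    assume "\<not> ?thesis"
    then have "{j. j \<le> m \<and> s j < a} = {..m}" by force
    then have "cL = Suc m" unfolding cL_def by simp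
    then show False using hL by simp
  qed
  have exG: "\<exists>j\<le>m. s j \<le> a"
  proof (rule ccontr)
    assume "\<not> ?thesis"
    then have "{j. j \<le> m \<and> a < s j} = {..m}" by force
    then have "cG = Suc m" unfolding cG_def by simp
    then show False using hG by simp
  qed
  have L: "2 * (\<Sum>j\<in>{j. j \<le> m \<and> s j < a}. (a - s j)) \<le> int cL * (int cL + 1)"
    using triL[OF w exL] unfolding cL_def .
  have G: "2 * (\<Sum>j\<in>{j. j \<le> m \<and> a < s j}. (s j - a)) \<le> int cG * (int cG + 1)"
    using triR[OF w exG] unfolding cG_def .
  have cL2: "int cL \<le> int ((m + 1) div 2)" using hL by simp
  have cG2: "int cG \<le> int (m div 2)" using hG by simp
  have "int cL * (int cL + 1) \<le> int ((m + 1) div 2) * (int ((m + 1) div 2) + 1)"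
    using cL2 by (intro mult_mono) auto
  moreover have "int cG * (int cG + 1) \<le> int (m div 2) * (int (m div 2) + 1)"
    using cG2 by (intro mult_mono) auto
  ultimately show ?thesis using L G phi_split[of s m a] by (intro exI[of _ a]) linarith
qed

definition tri :: "nat \<Rightarrow> nat" where "tri k = k * (k + 1) div 2"

lemma tri2_nat: "2 * tri k = k * (k + 1)"
  unfolding tri_def by (rule even_two_times_div_two) simp

lemma tri2: "2 * int (tri k) = int k * (int k + 1)"
proof -
  have "int (2 * tri k) = int (k * (k + 1))" by (simp only: tri2_nat)
  then show ?thesis by (simp add: algebra_simps)
qed

definition Dfun :: "nat \<Rightarrow> nat \<Rightarrow> nat" where
  "Dfun n m = (if n = 1 then tri ((m + 1) div 2) + tri (m div 2)
     else if m \<le> n then n * (m + 1) div 2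
     else (let d0 = tri ((m + n) div 2) + tri ((m - n + 1) div 2) in
           if even (m - n) \<or> n \<le> (m + 2) div 2 then d0 else d0 + n - (m + 2) div 2))"

lemma sq_mono: "0 \<le> x \<Longrightarrow> x \<le> y \<Longrightarrow> x * (x + 1) \<le> y * (y + (1::int))"
  by (intro mult_mono) auto

lemma arith_final:
  fixes pa pb :: int and cL cR :: nat
  assumes n2: "2 \<le> n"
    and hL: "cL = 0 \<or> int n \<le> int (Suc m) - 2 * int cL"
    and hR: "cR = 0 \<or> int n \<le> int (Suc m) - 2 * int cR"
    and hs: "pa + pb \<le> int n * int (Suc m) + int cL * (int cL + 1) + int cR * (int cR + 1)"
    and spL: "1 \<le> cL \<and> 2 * cL + n = Suc m \<longrightarrow> 2 * pa \<le> int cL * (int cL + 1) + (int m - int cL) * (int m - int cL + 1)"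
    and spR: "1 \<le> cR \<and> 2 * cR + n = Suc m \<longrightarrow> 2 * pb \<le> int cR * (int cR + 1) + (int m - int cR) * (int m - int cR + 1)"
  shows "pa \<le> int (Dfun n m) \<or> pb \<le> int (Dfun n m)"
proof (cases "m \<le> n")
  case True
  have "cL = 0" using hL True by auto
  moreover have "cR = 0" using hR True by auto
  ultimately have s: "pa + pb \<le> int n * int (Suc m)" using hs by simp
  have D: "int (Dfun n m) = (int n * int (Suc m)) div 2" using True n2 unfolding Dfun_def by (simp add: zdiv_int algebra_simps)
  have "int n * int (Suc m) \<le> 2 * ((int n * int (Suc m)) div 2) + 1" by linarith
  then show ?thesis using s D by linarith
next
  case False
  then have mn: "n < m" by simp
  obtain q where q: "m - n = 2 * q \<or> m - n = 2 * q + 1" by (metis evenE oddE)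
  show ?thesis
  proof (cases "m - n = 2 * q")
    case True
    then have m: "m = n + 2 * q" using mn by simp
    have A: "(m + n) div 2 = n + q" using m by simp
    have B: "(m - n + 1) div 2 = q" using m by simp
    have D: "Dfun n m = tri (n + q) + tri q" using n2 mn A B True unfolding Dfun_def by (simp add: Let_def)
    have cLq: "int cL \<le> int q" using hL m by auto
    have cRq: "int cR \<le> int q" using hR m by auto
    have "int cL * (int cL + 1) \<le> int q * (int q + 1)" using cLq by (intro sq_mono) auto
    moreover have "int cR * (int cR + 1) \<le> int q * (int q + 1)" using cRq by (intro sq_mono) auto
    ultimately have s: "pa + pb \<le> int n * int (Suc m) + 2 * (int q * (int q + 1))" using hs by linarith
    have "int n * int (Suc m) + 2 * (int q * (int q + 1)) = 2 * int (tri (n + q)) + 2 * int (tri q)"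
      unfolding tri2 m by (simp add: algebra_simps)
    then show ?thesis using s D by linarith
  next
    case False
    then have m: "m = n + 2 * q + 1" using q mn by simp
    have A: "(m + n) div 2 = n + q" using m by simp
    have B: "(m - n + 1) div 2 = q + 1" using m by simp
    define d0 where "d0 = tri (n + q) + tri (q + 1)"
    have d0e: "2 * int d0 = (int n + int q) * (int n + int q + 1) + (int q + 1) * (int q + 2)"
      unfolding d0_def using tri2[of "n + q"] tri2[of "q + 1"] by (simp add: algebra_simps)
    have Dge: "d0 \<le> Dfun n m" using n2 mn A B unfolding Dfun_def d0_def by (auto simp: Let_def)
    show ?thesis
    proof (cases "1 \<le> cL \<and> 2 * cL + n = Suc m")
      case True
      then have cq: "cL = q + 1" using m by simp
      have "2 * pa \<le> int cL * (int cL + 1) + (int m - int cL) * (int m - int cL + 1)" using spL True by blast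
      moreover have "int cL * (int cL + 1) + (int m - int cL) * (int m - int cL + 1) = 2 * int d0"
        unfolding d0e using cq m by (simp add: algebra_simps)
      ultimately have "pa \<le> int d0" by linarith
      then show ?thesis using Dge by simp
    next
      case nL: False
      show ?thesis
      proof (cases "1 \<le> cR \<and> 2 * cR + n = Suc m")
        case True
        then have cq: "cR = q + 1" using m by simp
        have "2 * pb \<le> int cR * (int cR + 1) + (int m - int cR) * (int m - int cR + 1)" using spR True by blast
        moreover have "int cR * (int cR + 1) + (int m - int cR) * (int m - int cR + 1) = 2 * int d0"
          unfolding d0e using cq m by (simp add: algebra_simps)
        ultimately have "pb \<le> int d0" by linarith
        then show ?thesis using Dge by simp
      next
        case nR: False
        have cLq: "int cL \<le> int q" using hL nL m by auto
        have cRq: "int cR \<le> int q" using hR nR m by auto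
        have "int cL * (int cL + 1) \<le> int q * (int q + 1)" using cLq by (intro sq_mono) auto
        moreover have "int cR * (int cR + 1) \<le> int q * (int q + 1)" using cRq by (intro sq_mono) auto
        ultimately have s: "pa + pb \<le> int n * int (Suc m) + 2 * (int q * (int q + 1))" using hs by linarith
        have e: "int n * int (Suc m) + 2 * (int q * (int q + 1)) = 2 * int d0 + int n - 2 * int q - 2"
          unfolding d0e m by (simp add: algebra_simps)
        show ?thesis
        proof (cases "n \<le> (m + 2) div 2")
          case True
          then have "int n \<le> 2 * int q + 3" using m by simp
          moreover have "Dfun n m = d0" using True n2 mn A B unfolding Dfun_def d0_def by (simp add: Let_def)
          ultimately show ?thesis using s e by linarith
        next
          case False
          have "\<not> even (m - n)" using m by simp
          then have "Dfun n m = d0 + n - (m + 2) div 2" using False n2 mn A B unfolding Dfun_def d0_def by (simp add: Let_def)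
          moreover have "2 * ((m + 2) div 2) \<le> m + 2" by simp
          ultimately have "2 * int (Dfun n m) + 1 \<ge> 2 * int d0 + int n - 2 * int q - 2" using False m by simp
          then show ?thesis using s e by linarith
        qed
      qed
    qed
  qed
qed

lemma comb_upper:
  assumes w: "walk s m" and n1: "1 \<le> n"
  shows "\<exists>t. t mod int n = r mod int n \<and> phi s m t \<le> int (Dfun n m)"
proof (cases "n = 1")
  case True
  obtain a where a: "2 * phi s m a \<le> int ((m + 1) div 2) * (int ((m + 1) div 2) + 1) + int (m div 2) * (int (m div 2) + 1)"
    using median[OF w] by blast
  have "2 * int (Dfun n m) = int ((m + 1) div 2) * (int ((m + 1) div 2) + 1) + int (m div 2) * (int (m div 2) + 1)"
    using True unfolding Dfun_def by (simp add: tri2 algebra_simps)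
  then have "phi s m a \<le> int (Dfun n m)" "phi s m (a + int 0) \<le> int (Dfun n m)" using a by simp_all
  from window[OF this, of r] show ?thesis using True by simp
next
  case False
  then have n2: "2 \<le> n" using n1 by simp
  obtain a where a: "phi s m (a + int (n - 1)) \<le> phi s m a" "phi s m (a + 1) \<le> phi s m (a + int n)"
    "card {j. j \<le> m \<and> s j < a} = 0 \<or> int n \<le> int (Suc m) - 2 * int (card {j. j \<le> m \<and> s j < a})"
    "card {j. j \<le> m \<and> a + int n < s j} = 0 \<or> int n \<le> int (Suc m) - 2 * int (card {j. j \<le> m \<and> a + int n < s j})"
    "phi s m a + phi s m (a + int n) \<le> int n * int (Suc m)
       + int (card {j. j \<le> m \<and> s j < a}) * (int (card {j. j \<le> m \<and> s j < a}) + 1)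
       + int (card {j. j \<le> m \<and> a + int n < s j}) * (int (card {j. j \<le> m \<and> a + int n < s j}) + 1)"
    "1 \<le> card {j. j \<le> m \<and> s j < a} \<and> 2 * card {j. j \<le> m \<and> s j < a} + n = Suc m \<longrightarrow>
       2 * phi s m a \<le> int (card {j. j \<le> m \<and> s j < a}) * (int (card {j. j \<le> m \<and> s j < a}) + 1)
          + (int m - int (card {j. j \<le> m \<and> s j < a})) * (int m - int (card {j. j \<le> m \<and> s j < a}) + 1)"
    "1 \<le> card {j. j \<le> m \<and> a + int n < s j} \<and> 2 * card {j. j \<le> m \<and> a + int n < s j} + n = Suc m \<longrightarrow>
       2 * phi s m (a + int n) \<le> int (card {j. j \<le> m \<and> a + int n < s j}) * (int (card {j. j \<le> m \<and> a + int n < s j}) + 1)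
          + (int m - int (card {j. j \<le> m \<and> a + int n < s j})) * (int m - int (card {j. j \<le> m \<and> a + int n < s j}) + 1)"
    using key[OF w n2] by blast
  have nS: "Suc (n - 1) = n" using n2 by simp
  from arith_final[OF n2 a(3) a(4) a(5) a(6) a(7)]
  show ?thesis
  proof
    assume h: "phi s m a \<le> int (Dfun n m)"
    then have "phi s m (a + int (n - 1)) \<le> int (Dfun n m)" using a(1) by simp
    from window[OF h this, of r] show ?thesis unfolding nS .
  next
    assume h: "phi s m (a + int n) \<le> int (Dfun n m)"
    then have h1: "phi s m (a + 1) \<le> int (Dfun n m)" using a(2) by simp
    have "a + 1 + int (n - 1) = a + int n" using n2 by simp
    then have "phi s m (a + 1 + int (n - 1)) \<le> int (Dfun n m)" using h by simp
    from window[OF h1 this, of r] show ?thesis unfolding nS .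
  qed
qed

lemma gauss_rev: "2 * (\<Sum>j\<le>t. (int t - int j)) = int t * (int t + 1)"
proof (induction t)
  case 0 then show ?case by simp
next
  case (Suc t)
  have "(\<Sum>j\<le>Suc t. (int (Suc t) - int j)) = (\<Sum>j\<le>t. (int (Suc t) - int j))"
    by (simp add: sum.atMost_Suc)
  also have "\<dots> = (\<Sum>j\<le>t. (int t - int j)) + (\<Sum>j\<le>t. (1::int))"
    by (subst sum.distrib[symmetric]) (intro sum.cong, auto)
  finally show ?case using Suc by (simp add: algebra_simps)
qed

lemma spread_exact:
  assumes "t \<le> M"
  shows "2 * (\<Sum>j\<le>M. \<bar>int t - int j\<bar>) = int t * (int t + 1) + (int M - int t) * (int M - int t + 1)"
  using assms
proof (induction M)
  case 0 then show ?case by simp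
next
  case (Suc M)
  show ?case
  proof (cases "t = Suc M")
    case True
    have "(\<Sum>j\<le>Suc M. \<bar>int t - int j\<bar>) = (\<Sum>j\<le>t. (int t - int j))"
      using True by (intro sum.cong) auto
    then show ?thesis using gauss_rev[of t] True by simp
  next
    case False
    then have "t \<le> M" using Suc.prems by simp
    then have "2 * (\<Sum>j\<le>M. \<bar>int t - int j\<bar>) = int t * (int t + 1) + (int M - int t) * (int M - int t + 1)"
      using Suc.IH by blast
    moreover have "(\<Sum>j\<le>Suc M. \<bar>int t - int j\<bar>) = (\<Sum>j\<le>M. \<bar>int t - int j\<bar>) + (int M + 1 - int t)"
      using \<open>t \<le> M\<close> by (simp add: sum.atMost_Suc)
    ultimately show ?thesis by (simp add: algebra_simps)
  qed
qed

lemma lam_diff: "(x * (x + 1) + (M - x) * (M - x + 1)) - (P * (P + 1) + (M - P) * (M - P + 1)) = 2 * ((x - P) * (x + P - M))"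
  for x M P :: int
  by (simp add: algebra_simps)

lemma spread_lb:
  fixes t :: int and M P :: nat
  assumes P: "2 * P \<le> M" and t: "t \<le> int P \<or> int M - int P \<le> t"
  shows "int P * (int P + 1) + (int M - int P) * (int M - int P + 1) \<le> 2 * (\<Sum>j\<le>M. \<bar>t - int j\<bar>)"
proof -
  define L where "L x = x * (x + 1) + (int M - x) * (int M - x + 1)" for x :: int
  have Lge: "L (int P) \<le> L x" if "x \<le> int P \<or> int M - int P \<le> x" for x
  proof -
    have "L x - L (int P) = 2 * ((x - int P) * (x + int P - int M))" unfolding L_def by (rule lam_diff)
    moreover have "0 \<le> (x - int P) * (x + int P - int M)"
    proof (cases "x \<le> int P")
      case True
      then have "x - int P \<le> 0" "x + int P - int M \<le> 0" using P by auto
      then show ?thesis by (simp add: mult_nonpos_nonpos)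
    next
      case False
      then have "int M - int P \<le> x" using that by simp
      then have "0 \<le> x - int P" "0 \<le> x + int P - int M" using P by auto
      then show ?thesis by simp
    qed
    ultimately show ?thesis by simp
  qed
  show ?thesis
  proof (cases "t < 0")
    case True
    have "(\<Sum>j\<le>M. \<bar>int 0 - int j\<bar>) \<le> (\<Sum>j\<le>M. \<bar>t - int j\<bar>)"
      using True by (intro sum_mono) auto
    moreover have "2 * (\<Sum>j\<le>M. \<bar>int 0 - int j\<bar>) = L 0" using spread_exact[of 0 M] unfolding L_def by simp
    moreover have "L (int P) \<le> L 0" using Lge[of 0] P by simp
    ultimately show ?thesis unfolding L_def by linarith
  next
    case False
    show ?thesis
    proof (cases "t \<le> int M")
      case True
      then obtain tn where tn: "t = int tn" "tn \<le> M" using False by (metis nonneg_int_cases not_less of_nat_le_iff)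
      have "2 * (\<Sum>j\<le>M. \<bar>t - int j\<bar>) = L t" using spread_exact[OF tn(2)] tn(1) unfolding L_def by simp
      then show ?thesis using Lge[OF t] unfolding L_def by simp
    next
      case False
      have "(\<Sum>j\<le>M. \<bar>int M - int j\<bar>) \<le> (\<Sum>j\<le>M. \<bar>t - int j\<bar>)"
        using False by (intro sum_mono) auto
      moreover have "2 * (\<Sum>j\<le>M. \<bar>int M - int j\<bar>) = L (int M)" using spread_exact[of M M] unfolding L_def by simp
      moreover have "L (int P) \<le> L (int M)" using Lge[of "int M"] P by simp
      ultimately show ?thesis unfolding L_def by linarith
    qed
  qed
qed

lemma phi_sum_lb: "\<bar>int (Suc m) * t - (\<Sum>j\<le>m. s j)\<bar> \<le> phi s m t"
proof -
  have "int (Suc m) * t - (\<Sum>j\<le>m. s j) = (\<Sum>j\<le>m. (t - s j))"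
    by (simp add: sum_subtractf)
  then show ?thesis unfolding phi_def by (metis sum_abs)
qed



definition Asum :: "int list \<Rightarrow> nat \<Rightarrow> int" where
  "Asum x l = (\<Sum>i\<in>{1..l}. x ! i)"

definition Ssum :: "int list \<Rightarrow> int list \<Rightarrow> nat \<Rightarrow> int" where
  "Ssum v w l = Asum w l - Asum v l"

lemma A_change:
  assumes same: "\<And>i. 1 \<le> i \<Longrightarrow> i \<le> m \<Longrightarrow> i \<noteq> j \<Longrightarrow> i \<noteq> Suc j \<Longrightarrow> x' ! i = x ! i"
    and cj: "1 \<le> j \<Longrightarrow> j \<le> m \<Longrightarrow> x' ! j = x ! j + \<delta>"
    and cj1: "Suc j \<le> m \<Longrightarrow> x' ! Suc j = x ! Suc j - \<delta>"
  shows "l \<le> m \<Longrightarrow> Asum x' l = Asum x l + \<delta> * (of_bool (1 \<le> j \<and> j \<le> l) - of_bool (Suc j \<le> l))"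
proof (induction l)
  case 0 then show ?case unfolding Asum_def by simp
next
  case (Suc l)
  have IH: "Asum x' l = Asum x l + \<delta> * (of_bool (1 \<le> j \<and> j \<le> l) - of_bool (Suc j \<le> l))"
    using Suc by simp
  have A1: "Asum y (Suc l) = Asum y l + y ! Suc l" for y unfolding Asum_def by simp
  consider "Suc l = j" | "Suc l = Suc j" | "Suc l \<noteq> j \<and> Suc l \<noteq> Suc j" by blast
  then show ?case
  proof cases
    case 1
    then show ?thesis using IH A1 cj[of] Suc.prems by (auto simp: algebra_simps)
  next
    case 2
    then show ?thesis using IH A1 cj1 Suc.prems by (auto simp: algebra_simps)
  next
    case 3
    then show ?thesis using IH A1 same[of "Suc l"] Suc.prems by (auto simp: algebra_simps)
  qed
qed

lemma vert_len: "v \<in> yoke_vertices n m \<Longrightarrow> length v = m + 2"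
  unfolding yoke_vertices_def by simp

lemma vert_int:
  assumes "v \<in> yoke_vertices n m" "1 \<le> i" "i \<le> m"
  shows "v ! i = 0 \<or> v ! i = 1"
proof -
  have nb: "\<not> is_bucket m i" "i < m + 2" using assms(2,3) by (auto simp: is_bucket_def)
  have "\<forall>j<m + 2. if is_bucket m j then 0 \<le> v ! j \<and> v ! j < int n else v ! j \<in> {0, 1}"
    using assms(1) unfolding yoke_vertices_def by blast
  then have "if is_bucket m i then 0 \<le> v ! i \<and> v ! i < int n else v ! i \<in> {0, 1}" using nb(2) by blast
  then show ?thesis using nb(1) by auto
qed

lemma modshift: "(a::int) mod n = (b + c) mod n \<Longrightarrow> b mod n = (a - c) mod n"
  by (metis mod_diff_left_eq add_diff_cancel_right')

lemma modshift2: "(a::int) mod n = (b - c) mod n \<Longrightarrow> b mod n = (a + c) mod n"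
  by (metis mod_add_left_eq diff_add_cancel)

lemma vert_b0: "v \<in> yoke_vertices n m \<Longrightarrow> 0 \<le> v ! 0 \<and> v ! 0 < int n"
  unfolding yoke_vertices_def is_bucket_def by auto

lemma vert_b1: "v \<in> yoke_vertices n m \<Longrightarrow> 0 \<le> v ! Suc m \<and> v ! Suc m < int n"
  unfolding yoke_vertices_def is_bucket_def by auto

lemma vert_sum: "v \<in> yoke_vertices n m \<Longrightarrow> sum_list v mod int n = 0"
  unfolding yoke_vertices_def by auto

lemma Ssum_walk:
  assumes "v \<in> yoke_vertices n m" "w \<in> yoke_vertices n m"
  shows "walk (Ssum v w) m"
  unfolding walk_def
proof (intro allI impI)
  fix j assume j: "j < m"
  have "Ssum v w (Suc j) - Ssum v w j = w ! Suc j - v ! Suc j"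
    unfolding Ssum_def Asum_def by simp
  moreover have "v ! Suc j = 0 \<or> v ! Suc j = 1" "w ! Suc j = 0 \<or> w ! Suc j = 1"
    using vert_int[OF assms(1)] vert_int[OF assms(2)] j by auto
  ultimately show "\<bar>Ssum v w (Suc j) - Ssum v w j\<bar> \<le> 1" by auto
qed

lemma Ssum0: "Ssum v w 0 = 0" unfolding Ssum_def Asum_def by simp

lemma Ssum_swap: "Ssum w v l = - Ssum v w l" unfolding Ssum_def by simp

lemma adj_decomp:
  assumes "yoke_adj n m y w"
  shows "\<exists>i0\<le>m. \<exists>\<delta>. (\<delta> = 1 \<or> \<delta> = -1) \<and>
    (\<forall>j<m+2. j \<noteq> i0 \<and> j \<noteq> Suc i0 \<longrightarrow> w ! j = y ! j) \<and>
    (if is_bucket m i0 then w ! i0 mod int n = (y ! i0 + \<delta>) mod int n else w ! i0 = y ! i0 + \<delta>) \<and>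
    (if is_bucket m (Suc i0) then w ! Suc i0 mod int n = (y ! Suc i0 - \<delta>) mod int n else w ! Suc i0 = y ! Suc i0 - \<delta>)"
proof -
  obtain i where i: "i \<le> m" "\<forall>j<m + 2. j \<noteq> i \<and> j \<noteq> i + 1 \<longrightarrow> y ! j = w ! j"
    "(entry_eq n m i (y ! i) (w ! i + 1) \<and> entry_eq n m (i+1) (y ! (i+1)) (w ! (i+1) - 1)) \<or>
     (entry_eq n m i (y ! i) (w ! i - 1) \<and> entry_eq n m (i+1) (y ! (i+1)) (w ! (i+1) + 1))"
    using assms unfolding yoke_adj_def by blast
  show ?thesis
  proof (rule exI[of _ i], intro conjI)
    show "i \<le> m" by fact
  next
    from i(3) show "\<exists>\<delta>. (\<delta> = 1 \<or> \<delta> = -1) \<and>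
    (\<forall>j<m+2. j \<noteq> i \<and> j \<noteq> Suc i \<longrightarrow> w ! j = y ! j) \<and>
    (if is_bucket m i then w ! i mod int n = (y ! i + \<delta>) mod int n else w ! i = y ! i + \<delta>) \<and>
    (if is_bucket m (Suc i) then w ! Suc i mod int n = (y ! Suc i - \<delta>) mod int n else w ! Suc i = y ! Suc i - \<delta>)"
    proof
      assume h: "entry_eq n m i (y ! i) (w ! i + 1) \<and> entry_eq n m (i+1) (y ! (i+1)) (w ! (i+1) - 1)"
      show ?thesis
      proof (rule exI[of _ "-1"], intro conjI)
        show "(\<forall>j<m+2. j \<noteq> i \<and> j \<noteq> Suc i \<longrightarrow> w ! j = y ! j)" using i(2) by auto
        show "if is_bucket m i then w ! i mod int n = (y ! i + -1) mod int n else w ! i = y ! i + -1"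
          using h unfolding entry_eq_def by (auto dest: modshift modshift2)
        show "if is_bucket m (Suc i) then w ! Suc i mod int n = (y ! Suc i - -1) mod int n else w ! Suc i = y ! Suc i - -1"
          using h unfolding entry_eq_def by (auto dest: modshift modshift2)
      qed simp
    next
      assume h: "entry_eq n m i (y ! i) (w ! i - 1) \<and> entry_eq n m (i+1) (y ! (i+1)) (w ! (i+1) + 1)"
      show ?thesis
      proof (rule exI[of _ "1"], intro conjI)
        show "(\<forall>j<m+2. j \<noteq> i \<and> j \<noteq> Suc i \<longrightarrow> w ! j = y ! j)" using i(2) by auto
        show "if is_bucket m i then w ! i mod int n = (y ! i + 1) mod int n else w ! i = y ! i + 1"
          using h unfolding entry_eq_def by (auto dest: modshift modshift2)
        show "if is_bucket m (Suc i) then w ! Suc i mod int n = (y ! Suc i - 1) mod int n else w ! Suc i = y ! Suc i - 1"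
          using h unfolding entry_eq_def by (auto dest: modshift modshift2)
      qed simp
    qed
  qed
qed

lemma Ssum_adj:
  assumes "yoke_adj n m y w"
  obtains i0 \<delta> where "i0 \<le> m" "\<delta> = 1 \<or> \<delta> = -1"
    "\<And>l. l \<le> m \<Longrightarrow> Ssum v w l = Ssum v y l + \<delta> * (of_bool (1 \<le> i0 \<and> i0 \<le> l) - of_bool (Suc i0 \<le> l))"
    "if i0 = 0 then w ! 0 mod int n = (y ! 0 + \<delta>) mod int n else w ! 0 = y ! 0"
proof -
  obtain i0 \<delta> where i0: "i0 \<le> m" "\<delta> = 1 \<or> \<delta> = -1"
    "\<forall>j<m+2. j \<noteq> i0 \<and> j \<noteq> Suc i0 \<longrightarrow> w ! j = y ! j"
    "if is_bucket m i0 then w ! i0 mod int n = (y ! i0 + \<delta>) mod int n else w ! i0 = y ! i0 + \<delta>"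
    "if is_bucket m (Suc i0) then w ! Suc i0 mod int n = (y ! Suc i0 - \<delta>) mod int n else w ! Suc i0 = y ! Suc i0 - \<delta>"
    using adj_decomp[OF assms] by blast
  have A: "Asum w l = Asum y l + \<delta> * (of_bool (1 \<le> i0 \<and> i0 \<le> l) - of_bool (Suc i0 \<le> l))" if "l \<le> m" for l
  proof (rule A_change[OF _ _ _ that])
    show "w ! i = y ! i" if "1 \<le> i" "i \<le> m" "i \<noteq> i0" "i \<noteq> Suc i0" for i
      using i0(3) that by auto
    show "w ! i0 = y ! i0 + \<delta>" if "1 \<le> i0" "i0 \<le> m"
      using i0(4) that by (auto simp: is_bucket_def)
    show "w ! Suc i0 = y ! Suc i0 - \<delta>" if "Suc i0 \<le> m"
      using i0(5) that by (auto simp: is_bucket_def)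
  qed
  have S: "Ssum v w l = Ssum v y l + \<delta> * (of_bool (1 \<le> i0 \<and> i0 \<le> l) - of_bool (Suc i0 \<le> l))" if "l \<le> m" for l
    using A[OF that] unfolding Ssum_def by simp
  have Z: "if i0 = 0 then w ! 0 mod int n = (y ! 0 + \<delta>) mod int n else w ! 0 = y ! 0"
    using i0(3,4) by (auto simp: is_bucket_def)
  show ?thesis using that[OF i0(1,2) S Z] by blast
qed

lemma dist_lb:
  "(v, w) \<in> yoke_edges n m ^^ k \<Longrightarrow> \<exists>t. t mod int n = (v ! 0 - w ! 0) mod int n \<and> phi (Ssum v w) m t \<le> int k"
proof (induction k arbitrary: w)
  case 0
  then have "v = w" by simp
  then show ?case by (intro exI[of _ 0]) (simp add: phi_def Ssum_def)
next
  case (Suc k)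
  then obtain y where y: "(v, y) \<in> yoke_edges n m ^^ k" "(y, w) \<in> yoke_edges n m" by auto
  obtain t' where t': "t' mod int n = (v ! 0 - y ! 0) mod int n" "phi (Ssum v y) m t' \<le> int k"
    using Suc.IH[OF y(1)] by blast
  have adj: "yoke_adj n m y w" using y(2) unfolding yoke_edges_def by simp
  obtain i0 \<delta> where i0: "i0 \<le> m" "\<delta> = 1 \<or> \<delta> = -1"
    "\<And>l. l \<le> m \<Longrightarrow> Ssum v w l = Ssum v y l + \<delta> * (of_bool (1 \<le> i0 \<and> i0 \<le> l) - of_bool (Suc i0 \<le> l))"
    "if i0 = 0 then w ! 0 mod int n = (y ! 0 + \<delta>) mod int n else w ! 0 = y ! 0"
    using Ssum_adj[OF adj] by blast
  define t where "t = t' + (if i0 = 0 then - \<delta> else 0)"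
  have res: "t mod int n = (v ! 0 - w ! 0) mod int n"
  proof (cases "i0 = 0")
    case True
    then have w0: "w ! 0 mod int n = (y ! 0 + \<delta>) mod int n" using i0(4) by simp
    have "t mod int n = (t' - \<delta>) mod int n" using True t_def by simp
    also have "\<dots> = (v ! 0 - y ! 0 - \<delta>) mod int n" using t'(1) by (metis mod_diff_left_eq)
    also have "\<dots> = (v ! 0 - (y ! 0 + \<delta>)) mod int n" by (simp add: algebra_simps)
    also have "\<dots> = (v ! 0 - w ! 0) mod int n" using w0 by (metis mod_diff_right_eq)
    finally show ?thesis .
  next
    case False
    then show ?thesis using t'(1) i0(4) t_def by simp
  qed
  have pt: "t - Ssum v w l = (t' - Ssum v y l) + (if l = i0 then - \<delta> else 0)" if "l \<le> m" for l
    using i0(3)[OF that] t_def by (cases "i0 = 0"; cases "l = i0"; auto)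
  have "phi (Ssum v w) m t \<le> (\<Sum>l\<le>m. \<bar>t' - Ssum v y l\<bar> + \<bar>if l = i0 then - \<delta> else 0\<bar>)"
    unfolding phi_def
  proof (intro sum_mono)
    fix l assume "l \<in> {..m}"
    then have "t - Ssum v w l = (t' - Ssum v y l) + (if l = i0 then - \<delta> else 0)" using pt by simp
    then show "\<bar>t - Ssum v w l\<bar> \<le> \<bar>t' - Ssum v y l\<bar> + \<bar>if l = i0 then - \<delta> else 0\<bar>"
      by (metis abs_triangle_ineq)
  qed
  also have "\<dots> = phi (Ssum v y) m t' + (\<Sum>l\<le>m. \<bar>if l = i0 then - \<delta> else 0\<bar>)"
    unfolding phi_def by (simp add: sum.distrib)
  also have "(\<Sum>l\<le>m. \<bar>if l = i0 then - \<delta> else 0\<bar>) = 1"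
    using i0(1,2) by (auto simp: if_distrib cong: if_cong)
  finally show ?case using t'(2) res by (intro exI[of _ t]) simp
qed

lemma Ssum_Suc: "Ssum v w (Suc l) = Ssum v w l + (w ! Suc l - v ! Suc l)"
  unfolding Ssum_def Asum_def by simp

lemma adj_sym: "yoke_adj n m u v \<Longrightarrow> yoke_adj n m v u"
  unfolding yoke_adj_def entry_eq_def
  apply (elim conjE exE)
  apply (intro conjI)
     apply assumption+
   apply (simp add: eq_commute)
  subgoal for i
    apply (rule exI[of _ i])
    apply (auto split: if_splits dest: modshift modshift2)
    done
  done

lemma zero_cost:
  assumes V: "v \<in> yoke_vertices n m" "w \<in> yoke_vertices n m" and n1: "1 \<le> n"
    and res: "t mod int n = (v ! 0 - w ! 0) mod int n"
    and z: "phi (Ssum v w) m t \<le> 0"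
  shows "v = w"
proof -
  have "phi (Ssum v w) m t = 0" using z unfolding phi_def by (simp add: antisym sum_nonneg)
  then have all: "\<And>l. l \<le> m \<Longrightarrow> t = Ssum v w l" unfolding phi_def
    by (subst (asm) sum_nonneg_eq_0_iff) auto
  have t0: "t = 0" using all[of 0] Ssum0 by simp
  have e0: "v ! 0 = w ! 0"
  proof -
    have "v ! 0 mod int n = w ! 0 mod int n" using res t0 by (simp add: mod_eq_dvd_iff dvd_eq_mod_eq_0)
    moreover have "v ! 0 mod int n = v ! 0" "w ! 0 mod int n = w ! 0"
      using vert_b0[OF V(1)] vert_b0[OF V(2)] by simp_all
    ultimately show ?thesis by simp
  qed
  have ei: "v ! i = w ! i" if h: "1 \<le> i" "i \<le> m" for i
  proof -
    obtain k where k: "i = Suc k" using h(1) by (cases i) auto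
    have "Ssum v w (Suc k) = Ssum v w k" using all[of k] all[of "Suc k"] h k by simp
    then show ?thesis using Ssum_Suc[of v w k] k by simp
  qed
  have ele: "v ! i = w ! i" if "i \<le> m" for i
    using e0 ei that by (cases "i = 0") auto
  have lv: "length v = Suc (Suc m)" "length w = Suc (Suc m)" using vert_len[OF V(1)] vert_len[OF V(2)] by simp_all
  have sv: "sum_list v = (\<Sum>i\<le>m. v ! i) + v ! Suc m"
    unfolding sum_list_sum_nth lv(1) by (simp add: lessThan_Suc_atMost[symmetric] atLeast0LessThan)
  have sw: "sum_list w = (\<Sum>i\<le>m. w ! i) + w ! Suc m"
    unfolding sum_list_sum_nth lv(2) by (simp add: lessThan_Suc_atMost[symmetric] atLeast0LessThan)
  have "(\<Sum>i\<le>m. v ! i) = (\<Sum>i\<le>m. w ! i)" using ele by (intro sum.cong) auto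
  then have "int n dvd (v ! Suc m - w ! Suc m)"
    using vert_sum[OF V(1)] vert_sum[OF V(2)] sv sw
    by (metis add_diff_cancel_left dvd_diff mod_0_imp_dvd)
  then have "v ! Suc m mod int n = w ! Suc m mod int n" by (simp add: mod_eq_dvd_iff)
  moreover have "v ! Suc m mod int n = v ! Suc m" "w ! Suc m mod int n = w ! Suc m"
    using vert_b1[OF V(1)] vert_b1[OF V(2)] by simp_all
  ultimately have em: "v ! Suc m = w ! Suc m" by simp
  show ?thesis
  proof (rule nth_equalityI)
    show "length v = length w" using lv by simp
    fix i assume "i < length v"
    then have "i \<le> m \<or> i = Suc m" using lv by auto
    then show "v ! i = w ! i" using ele em by auto
  qed
qed

lemma sum_list_upd_int: "k < length xs \<Longrightarrow> sum_list (xs[k := x]) = sum_list xs + x - xs ! k"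
  for xs :: "int list"
  by (induction xs arbitrary: k) (auto split: nat.splits)

definition bk :: "nat \<Rightarrow> nat \<Rightarrow> nat \<Rightarrow> int \<Rightarrow> int" where
  "bk n m p x = (if is_bucket m p then x mod int n else x)"

lemma bk_mod: "bk n m p x mod int n = x mod int n"
  unfolding bk_def by simp

lemma bk_dvd: "int n dvd (bk n m p x - x)"
  unfolding bk_def by (simp add: mod_eq_dvd_iff[symmetric])

lemma move:
  assumes V: "v \<in> yoke_vertices n m" "w \<in> yoke_vertices n m" and n1: "1 \<le> n"
    and res: "t mod int n = (v ! 0 - w ! 0) mod int n"
    and pos: "l0 \<le> m" "0 < t - Ssum v w l0"
  shows "\<exists>v' t'. v' \<in> yoke_vertices n m \<and> (v' = v \<or> yoke_adj n m v v') \<and>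
           t' mod int n = (v' ! 0 - w ! 0) mod int n \<and> phi (Ssum v' w) m t' = phi (Ssum v w) m t - 1"
proof -
  define f where "f l = t - Ssum v w l" for l
  define tok where "tok j \<longleftrightarrow> j = 0 \<or> v ! j = 1" for j
  have frel: "f (Suc l) - f l = v ! Suc l - w ! Suc l" for l
    unfolding f_def using Ssum_Suc[of v w l] by simp
  have vi: "v ! i = 0 \<or> v ! i = 1" "w ! i = 0 \<or> w ! i = 1" if "1 \<le> i" "i \<le> m" for i
    using vert_int[OF V(1) that] vert_int[OF V(2) that] by auto
  have ex: "\<exists>j\<le>l. 0 < f j \<and> tok j" if "l \<le> m" "0 < f l" for l
    using that
  proof (induction l)
    case 0 then show ?case unfolding tok_def by auto
  next
    case (Suc l)
    show ?case
    proof (cases "tok (Suc l)")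
      case True then show ?thesis using Suc.prems by blast
    next
      case False
      then have "v ! Suc l = 0" using vi[of "Suc l"] Suc.prems unfolding tok_def by auto
      then have "f l \<ge> f (Suc l)" using frel[of l] vi[of "Suc l"] Suc.prems by auto
      then obtain j where "j \<le> l" "0 < f j" "tok j" using Suc.IH Suc.prems by auto
      then show ?thesis by (intro exI[of _ j]) auto
    qed
  qed
  define J where "J = {j. j \<le> m \<and> 0 < f j \<and> tok j}"
  obtain j0 where j0: "j0 \<le> l0" "0 < f j0" "tok j0" using ex[OF pos(1)] pos(2) unfolding f_def by blast
  then have "j0 \<in> J" using pos(1) unfolding J_def by auto
  then have Jne: "J \<noteq> {}" by blast
  have Jfin: "finite J" unfolding J_def by auto
  define j where "j = Max J"
  have jJ: "j \<in> J" unfolding j_def using Max_in[OF Jfin Jne] .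
  have jm: "j \<le> m" and fj: "0 < f j" and tj: "tok j" using jJ unfolding J_def by auto
  have jmax: "\<And>i. i \<in> J \<Longrightarrow> i \<le> j" unfolding j_def using Jfin by simp
  have free: "j = m \<or> v ! Suc j = 0"
  proof (cases "j = m")
    case False
    then have sj: "Suc j \<le> m" using jm by simp
    show ?thesis
    proof (cases "0 < f (Suc j)")
      case True
      then have "\<not> tok (Suc j)" using jmax[of "Suc j"] sj unfolding J_def by auto
      then show ?thesis using vi[of "Suc j"] sj unfolding tok_def by auto
    next
      case False
      then have "v ! Suc j - w ! Suc j < 0" using frel[of j] fj by simp
      then show ?thesis using vi[of "Suc j"] sj by auto
    qed
  qed simp
  have lv: "length v = Suc (Suc m)" using vert_len[OF V(1)] by simp
  define v' where "v' = v[j := bk n m j (v ! j - 1), Suc j := bk n m (Suc j) (v ! Suc j + 1)]"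
  have lv': "length v' = Suc (Suc m)" unfolding v'_def using lv by simp
  have v'j: "v' ! j = bk n m j (v ! j - 1)" unfolding v'_def using lv jm by simp
  have v'j1: "v' ! Suc j = bk n m (Suc j) (v ! Suc j + 1)" unfolding v'_def using lv jm by simp
  have v'o: "v' ! p = v ! p" if "p \<noteq> j" "p \<noteq> Suc j" for p unfolding v'_def using that by simp
  have nbj: "v' ! j = v ! j - 1" if "1 \<le> j" unfolding v'j bk_def using that jm by (simp add: is_bucket_def)
  have nbj1: "v' ! Suc j = v ! Suc j + 1" if "Suc j \<le> m" unfolding v'j1 bk_def using that by (simp add: is_bucket_def)
  have Vv': "v' \<in> yoke_vertices n m"
  proof -
    have ent: "if is_bucket m p then 0 \<le> v' ! p \<and> v' ! p < int n else v' ! p \<in> {0, 1}" if p: "p < m + 2" for p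
    proof -
      have old: "if is_bucket m p then 0 \<le> v ! p \<and> v ! p < int n else v ! p \<in> {0, 1}"
        using V(1) p unfolding yoke_vertices_def by blast
      consider "p = j" | "p = Suc j" | "p \<noteq> j \<and> p \<noteq> Suc j" by blast
      then show ?thesis
      proof cases
        case 1
        show ?thesis
        proof (cases "is_bucket m p")
          case True then show ?thesis using 1 v'j n1 unfolding bk_def by simp
        next
          case False
          then have "1 \<le> j" "j \<le> m" using 1 p by (auto simp: is_bucket_def)
          then have "v ! j = 1" using tj unfolding tok_def by simp
          then show ?thesis using False 1 nbj \<open>1 \<le> j\<close> by simp
        qed
      next
        case 2
        show ?thesis
        proof (cases "is_bucket m p")
          case True then show ?thesis using 2 v'j1 n1 unfolding bk_def by simp
        next
          case False
          then have "Suc j \<le> m" using 2 p by (auto simp: is_bucket_def)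
          then have "v ! Suc j = 0" using free by simp
          then show ?thesis using False 2 nbj1 \<open>Suc j \<le> m\<close> by simp
        qed
      next
        case 3
        then have "v' ! p = v ! p" using v'o by simp
        then show ?thesis using old by (auto split: if_splits)
      qed
    qed
    have "sum_list v' = sum_list v + (bk n m j (v ! j - 1) - (v ! j - 1)) + (bk n m (Suc j) (v ! Suc j + 1) - (v ! Suc j + 1))"
    proof -
      have l1: "j < length v" "Suc j < length (v[j := bk n m j (v ! j - 1)])" using lv jm by auto
      have "sum_list v' = sum_list (v[j := bk n m j (v ! j - 1)]) + bk n m (Suc j) (v ! Suc j + 1) - (v[j := bk n m j (v ! j - 1)]) ! Suc j"
        unfolding v'_def by (rule sum_list_upd_int[OF l1(2)])
      also have "sum_list (v[j := bk n m j (v ! j - 1)]) = sum_list v + bk n m j (v ! j - 1) - v ! j"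
        by (rule sum_list_upd_int[OF l1(1)])
      also have "(v[j := bk n m j (v ! j - 1)]) ! Suc j = v ! Suc j" by simp
      finally show ?thesis by simp
    qed
    moreover have "int n dvd sum_list v" using vert_sum[OF V(1)] by (simp add: dvd_eq_mod_eq_0)
    moreover have "int n dvd (bk n m j (v ! j - 1) - (v ! j - 1))" by (rule bk_dvd)
    moreover have "int n dvd (bk n m (Suc j) (v ! Suc j + 1) - (v ! Suc j + 1))" by (rule bk_dvd)
    ultimately have "int n dvd sum_list v'" by (metis dvd_add)
    then have "sum_list v' mod int n = 0" by (simp add: dvd_eq_mod_eq_0)
    moreover have "length v' = m + 2" using lv' by simp
    ultimately show ?thesis unfolding yoke_vertices_def using ent by blast
  qed
  have adj: "v' = v \<or> yoke_adj n m v v'"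
  proof (cases "v' = v")
    case False
    have e1: "entry_eq n m j (v ! j) (v' ! j + 1)"
      unfolding entry_eq_def v'j bk_def by (simp add: mod_add_left_eq)
    have e2: "entry_eq n m (j + 1) (v ! (j + 1)) (v' ! (j + 1) - 1)"
      using v'j1 unfolding entry_eq_def bk_def by (simp add: mod_diff_left_eq)
    have "\<forall>p<m + 2. p \<noteq> j \<and> p \<noteq> j + 1 \<longrightarrow> v ! p = v' ! p" using v'o by simp
    then have "yoke_adj n m v v'" unfolding yoke_adj_def using V(1) Vv' False jm e1 e2 by blast
    then show ?thesis by simp
  qed simp
  have S': "Ssum v' w l = Ssum v w l + (of_bool (1 \<le> j \<and> j \<le> l) - of_bool (Suc j \<le> l))" if "l \<le> m" for l
  proof -
    have "Asum v' l = Asum v l + (-1) * (of_bool (1 \<le> j \<and> j \<le> l) - of_bool (Suc j \<le> l))"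
    proof (rule A_change[OF _ _ _ that])
      show "v' ! i = v ! i" if "1 \<le> i" "i \<le> m" "i \<noteq> j" "i \<noteq> Suc j" for i using v'o that by simp
      show "v' ! j = v ! j + -1" if "1 \<le> j" "j \<le> m" using nbj that by simp
      show "v' ! Suc j = v ! Suc j - -1" if "Suc j \<le> m" using nbj1 that by simp
    qed
    then show ?thesis unfolding Ssum_def by simp
  qed
  define t' where "t' = (if j = 0 then t - 1 else t)"
  have f': "t' - Ssum v' w l = f l - (if l = j then 1 else 0)" if "l \<le> m" for l
    using S'[OF that] unfolding t'_def f_def by (cases "j = 0"; cases "l = j"; auto)
  have "phi (Ssum v' w) m t' = (\<Sum>l\<le>m. \<bar>f l - (if l = j then 1 else 0)\<bar>)"
    unfolding phi_def using f' by (intro sum.cong) auto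
  also have "\<dots> = \<bar>f j - 1\<bar> + (\<Sum>l\<in>{..m} - {j}. \<bar>f l - (if l = j then 1 else 0)\<bar>)"
    using jm by (subst sum.remove[of _ j]) auto
  also have "(\<Sum>l\<in>{..m} - {j}. \<bar>f l - (if l = j then 1 else 0)\<bar>) = (\<Sum>l\<in>{..m} - {j}. \<bar>f l\<bar>)"
    by (intro sum.cong) auto
  also have "\<bar>f j - 1\<bar> = \<bar>f j\<bar> - 1" using fj by simp
  also have "\<bar>f j\<bar> - 1 + (\<Sum>l\<in>{..m} - {j}. \<bar>f l\<bar>) = (\<Sum>l\<le>m. \<bar>f l\<bar>) - 1"
    using jm by (subst (2) sum.remove[of _ j]) auto
  also have "(\<Sum>l\<le>m. \<bar>f l\<bar>) = phi (Ssum v w) m t" unfolding phi_def f_def by simp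
  finally have ph: "phi (Ssum v' w) m t' = phi (Ssum v w) m t - 1" .
  have rs: "t' mod int n = (v' ! 0 - w ! 0) mod int n"
  proof (cases "j = 0")
    case True
    have "v' ! 0 = (v ! 0 - 1) mod int n" using v'j True unfolding bk_def by (simp add: is_bucket_def)
    then have "(v' ! 0 - w ! 0) mod int n = (v ! 0 - 1 - w ! 0) mod int n" by (simp add: mod_diff_left_eq)
    also have "\<dots> = ((v ! 0 - w ! 0) - 1) mod int n" by (simp add: algebra_simps)
    also have "\<dots> = (t - 1) mod int n" using res by (metis mod_diff_left_eq)
    finally show ?thesis using True t'_def by simp
  next
    case False
    then have "v' ! 0 = v ! 0" using v'o[of 0] by simp
    then show ?thesis using res False t'_def by simp
  qed
  show ?thesis using Vv' adj rs ph by blast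
qed

lemma phi_swap: "phi (Ssum w v) m (- t) = phi (Ssum v w) m t"
  unfolding phi_def by (intro sum.cong) (auto simp: Ssum_swap[of w v])

lemma phi_nonneg: "0 \<le> phi s m t" unfolding phi_def by (simp add: sum_nonneg)

lemma dist_ub:
  assumes "v \<in> yoke_vertices n m" "w \<in> yoke_vertices n m" "1 \<le> n"
    "t mod int n = (v ! 0 - w ! 0) mod int n"
  shows "\<exists>k. int k \<le> phi (Ssum v w) m t \<and> (v, w) \<in> yoke_edges n m ^^ k"
  using assms
proof (induction "nat (phi (Ssum v w) m t)" arbitrary: v w t rule: less_induct)
  case less
  note V = less.prems(1,2) and n1 = less.prems(3) and res = less.prems(4)
  show ?case
  proof (cases "phi (Ssum v w) m t \<le> 0")
    case True
    then have "v = w" using zero_cost[OF V n1 res] by simp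
    then show ?thesis using phi_nonneg by (intro exI[of _ 0]) auto
  next
    case False
    have "\<exists>l\<le>m. t - Ssum v w l \<noteq> 0"
    proof (rule ccontr)
      assume "\<not> ?thesis"
      then have "phi (Ssum v w) m t = 0" unfolding phi_def by simp
      then show False using False by simp
    qed
    then obtain l where l: "l \<le> m" "t - Ssum v w l \<noteq> 0" by blast
    show ?thesis
    proof (cases "\<exists>l\<le>m. 0 < t - Ssum v w l")
      case True
      then obtain l0 where l0: "l0 \<le> m" "0 < t - Ssum v w l0" by blast
      obtain v' t' where v': "v' \<in> yoke_vertices n m" "v' = v \<or> yoke_adj n m v v'"
        "t' mod int n = (v' ! 0 - w ! 0) mod int n" "phi (Ssum v' w) m t' = phi (Ssum v w) m t - 1"
        using move[OF V n1 res l0] by blast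
      have lt: "nat (phi (Ssum v' w) m t') < nat (phi (Ssum v w) m t)" using v'(4) False by simp
      obtain k where k: "int k \<le> phi (Ssum v' w) m t'" "(v', w) \<in> yoke_edges n m ^^ k"
        using less.hyps[OF lt v'(1) V(2) n1 v'(3)] by blast
      show ?thesis
      proof (cases "v' = v")
        case True
        then show ?thesis using k v'(4) by (intro exI[of _ k]) auto
      next
        case False
        then have "(v, v') \<in> yoke_edges n m" using v'(2) unfolding yoke_edges_def by simp
        then have "(v, w) \<in> yoke_edges n m ^^ Suc k" using k(2) by (rule relpow_Suc_I2)
        then show ?thesis using k v'(4) by (intro exI[of _ "Suc k"]) auto
      qed
    next
      case nopos: False
      then have neg: "t - Ssum v w l < 0" using l by force
      have res': "(- t) mod int n = (w ! 0 - v ! 0) mod int n"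
        using res by (metis minus_diff_eq mod_minus_eq)
      have pos': "0 < - t - Ssum w v l" using neg Ssum_swap[of w v l] by simp
      obtain w' t'' where w': "w' \<in> yoke_vertices n m" "w' = w \<or> yoke_adj n m w w'"
        "t'' mod int n = (w' ! 0 - v ! 0) mod int n" "phi (Ssum w' v) m t'' = phi (Ssum w v) m (- t) - 1"
        using move[OF V(2) V(1) n1 res' l(1) pos'] by blast
      have ph: "phi (Ssum v w') m (- t'') = phi (Ssum v w) m t - 1"
        using w'(4) phi_swap[of v w' m t''] phi_swap[of w v m t] by simp
      have res'': "(- t'') mod int n = (v ! 0 - w' ! 0) mod int n"
        using w'(3) by (metis minus_diff_eq mod_minus_eq)
      have lt: "nat (phi (Ssum v w') m (- t'')) < nat (phi (Ssum v w) m t)" using ph False by simp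
      obtain k where k: "int k \<le> phi (Ssum v w') m (- t'')" "(v, w') \<in> yoke_edges n m ^^ k"
        using less.hyps[OF lt V(1) w'(1) n1 res''] by blast
      show ?thesis
      proof (cases "w' = w")
        case True
        then show ?thesis using k ph by (intro exI[of _ k]) auto
      next
        case False
        then have "yoke_adj n m w w'" using w'(2) by simp
        then have "(w', w) \<in> yoke_edges n m" using adj_sym unfolding yoke_edges_def by simp
        then have "(v, w) \<in> yoke_edges n m ^^ Suc k" using k(2) by (rule relpow_Suc_I[rotated])
        then show ?thesis using k ph by (intro exI[of _ "Suc k"]) auto
      qed
    qed
  qed
qed



definition mk :: "nat \<Rightarrow> int \<Rightarrow> int list \<Rightarrow> int list" where
  "mk n b xs = b # xs @ [(- (b + sum_list xs)) mod int n]"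

lemma mk_len: "length (mk n b xs) = length xs + 2" unfolding mk_def by simp

lemma mk_0: "mk n b xs ! 0 = b" unfolding mk_def by simp

lemma mk_i: "1 \<le> i \<Longrightarrow> i \<le> length xs \<Longrightarrow> mk n b xs ! i = xs ! (i - 1)"
  unfolding mk_def by (cases i) (auto simp: nth_append)

lemma mk_last: "mk n b xs ! Suc (length xs) = (- (b + sum_list xs)) mod int n"
  unfolding mk_def by (simp add: nth_append)

lemma mk_vert:
  assumes n1: "1 \<le> n" and b: "0 \<le> b" "b < int n" and len: "length xs = m" and xs: "set xs \<subseteq> {0, 1}"
  shows "mk n b xs \<in> yoke_vertices n m"
proof -
  have ent: "if is_bucket m j then 0 \<le> mk n b xs ! j \<and> mk n b xs ! j < int n else mk n b xs ! j \<in> {0, 1}"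
    if j: "j < m + 2" for j
  proof -
    consider "j = 0" | "1 \<le> j \<and> j \<le> m" | "j = Suc m" using j by linarith
    then show ?thesis
    proof cases
      case 1 then show ?thesis using b mk_0 by (simp add: is_bucket_def)
    next
      case 2
      then have "mk n b xs ! j = xs ! (j - 1)" using mk_i len by simp
      moreover have "xs ! (j - 1) \<in> set xs" using 2 len by auto
      ultimately show ?thesis using 2 xs by (auto simp: is_bucket_def)
    next
      case 3
      then show ?thesis using mk_last[of n b xs] len n1 by (simp add: is_bucket_def)
    qed
  qed
  have "sum_list (mk n b xs) = (b + sum_list xs) + (- (b + sum_list xs)) mod int n" unfolding mk_def by simp
  moreover have "((b + sum_list xs) + (- (b + sum_list xs)) mod int n) mod int n = 0"
    by (metis add.right_inverse mod_add_right_eq mod_0)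
  ultimately have "sum_list (mk n b xs) mod int n = 0" by simp
  moreover have "length (mk n b xs) = m + 2" using mk_len len by simp
  ultimately show ?thesis unfolding yoke_vertices_def using ent by blast
qed

lemma Asum_mk: "l \<le> length xs \<Longrightarrow> Asum (mk n b xs) l = (\<Sum>i<l. xs ! i)"
proof (induction l)
  case 0 then show ?case by (simp add: Asum_def)
next
  case (Suc l)
  have "Asum (mk n b xs) (Suc l) = Asum (mk n b xs) l + mk n b xs ! Suc l" unfolding Asum_def by simp
  also have "mk n b xs ! Suc l = xs ! l" using mk_i[of "Suc l" xs n b] Suc.prems by simp
  finally show ?case using Suc by simp
qed

lemma Ssum_mk:
  assumes "l \<le> m"
  shows "Ssum (mk n b (replicate m 0)) (mk n c (map g [0..<m])) l = (\<Sum>i<l. g i)"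
  unfolding Ssum_def using assms by (simp add: Asum_mk)

lemma res_split:
  assumes "t mod int n = P mod int n" "1 \<le> n"
  shows "t \<le> P \<or> P + int n \<le> t"
proof -
  have "int n dvd (t - P)" using assms(1) by (simp add: mod_eq_dvd_iff)
  then obtain q where q: "t - P = int n * q" by (auto simp: dvd_def)
  show ?thesis
  proof (cases "q \<le> 0")
    case True
    then have "int n * q \<le> 0" by (simp add: mult_nonneg_nonpos)
    then show ?thesis using q by simp
  next
    case False
    then have "int n * 1 \<le> int n * q" by (intro mult_left_mono) auto
    then show ?thesis using q by simp
  qed
qed

lemma sum_const1: "(\<Sum>i<l. (1::int)) = int l" by simp

lemma sum_3b: "(\<Sum>i<l. (if i = k then 0 else (1::int))) = int l - of_bool (k < l)"
  by (induction l) auto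

lemma sum_split_walk: "c \<le> m \<Longrightarrow> (\<Sum>l\<le>m. \<Sum>i<l. (if i + c = m then 1 else (0::int))) = int c"
proof -
  assume c: "c \<le> m"
  have e: "(\<Sum>i<l. (if i + c = m then 1 else (0::int))) = (if m - c < l then 1 else 0)" for l
    using c by (induction l) auto
  have "(\<Sum>l\<le>m. \<Sum>i<l. (if i + c = m then 1 else (0::int))) = (\<Sum>l\<le>m. (if m - c < l then 1 else 0))"
    by (rule sum.cong[OF refl]) (rule e)
  also have "\<dots> = int (card {l. l \<le> m \<and> m - c < l})" by (rule sum_ind_card)
  also have "{l. l \<le> m \<and> m - c < l} = {m - c + 1..m}" by auto
  finally show ?thesis using c by simp
qed

lemma phi_3b:
  fixes k d :: nat
  shows "phi (\<lambda>l. int l - of_bool (k < l)) (Suc k + d) t = (\<Sum>i\<le>k + d. \<bar>t - int i\<bar>) + \<bar>t - int k\<bar>"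
proof (induction d)
  case 0
  have "phi (\<lambda>l. int l - of_bool (k < l)) (Suc k) t = (\<Sum>l\<le>k. \<bar>t - (int l - of_bool (k < l))\<bar>) + \<bar>t - int k\<bar>"
    unfolding phi_def by simp
  also have "(\<Sum>l\<le>k. \<bar>t - (int l - of_bool (k < l))\<bar>) = (\<Sum>l\<le>k. \<bar>t - int l\<bar>)" by (intro sum.cong) auto
  finally show ?case by simp
next
  case (Suc d)
  have "phi (\<lambda>l. int l - of_bool (k < l)) (Suc k + Suc d) t = phi (\<lambda>l. int l - of_bool (k < l)) (Suc k + d) t + \<bar>t - int (k + Suc d)\<bar>"
    unfolding phi_def by simp
  then show ?case using Suc by simp
qed

lemma phi_restrict: "(\<And>l. l \<le> m \<Longrightarrow> s l = s' l) \<Longrightarrow> phi s m t = phi s' m t"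
  unfolding phi_def by (intro sum.cong) auto

lemma phi_spread: "phi (\<lambda>l. \<Sum>i<l. (1::int)) m t = (\<Sum>j\<le>m. \<bar>t - int j\<bar>)"
  unfolding phi_def by simp

lemma far_spread:
  assumes P: "2 * P \<le> m" and t: "t \<le> int P \<or> int m - int P \<le> t"
  shows "int (tri P) + int (tri (m - P)) \<le> phi (\<lambda>l. \<Sum>i<l. (1::int)) m t"
proof -
  have "int P * (int P + 1) + (int m - int P) * (int m - int P + 1) \<le> 2 * (\<Sum>j\<le>m. \<bar>t - int j\<bar>)"
    by (rule spread_lb[OF P t])
  moreover have "2 * int (tri P) = int P * (int P + 1)" by (rule tri2)
  moreover have "2 * int (tri (m - P)) = (int m - int P) * (int m - int P + 1)" using tri2[of "m - P"] P by simp
  ultimately show ?thesis unfolding phi_spread by linarith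
qed

lemma far1: "\<forall>t. t mod int 1 = 0 mod int 1 \<longrightarrow> int (Dfun 1 m) \<le> phi (\<lambda>l. \<Sum>i<l. (1::int)) m t"
proof (intro allI impI)
  fix t :: int
  define P where "P = m div 2"
  have P2: "2 * P \<le> m" unfolding P_def by simp
  have tt: "t \<le> int P \<or> int m - int P \<le> t" unfolding P_def by linarith
  have "int (tri P) + int (tri (m - P)) \<le> phi (\<lambda>l. \<Sum>i<l. (1::int)) m t" by (rule far_spread[OF P2 tt])
  moreover have "Dfun 1 m = tri (m - P) + tri P"
  proof -
    have "(m + 1) div 2 = m - P" unfolding P_def by arith
    then show ?thesis unfolding Dfun_def P_def by simp
  qed
  ultimately show "int (Dfun 1 m) \<le> phi (\<lambda>l. \<Sum>i<l. (1::int)) m t" by simp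
qed

lemma far2:
  assumes n2: "2 \<le> n" and mn: "m \<le> n" and ev: "even n"
  shows "\<forall>t. t mod int n = int (n div 2) mod int n \<longrightarrow> int (Dfun n m) \<le> phi (\<lambda>l. \<Sum>i<l. (0::int)) m t"
proof (intro allI impI)
  fix t :: int
  assume res: "t mod int n = int (n div 2) mod int n"
  obtain h where h: "n = 2 * h" using ev by blast
  have "(int h - int n) mod int n = int h mod int n" by simp
  then have "t mod int n = (int h - int n) mod int n" using res h by simp
  moreover have "1 \<le> n" using n2 by simp
  ultimately have "t \<le> int h - int n \<or> int h - int n + int n \<le> t" using res_split by blast
  then have ta: "int h \<le> \<bar>t\<bar>" using h by auto
  have "\<bar>int (Suc m) * t - (\<Sum>j\<le>m. \<Sum>i<j. (0::int))\<bar> \<le> phi (\<lambda>l. \<Sum>i<l. (0::int)) m t"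
    by (rule phi_sum_lb)
  then have A: "int (Suc m) * \<bar>t\<bar> \<le> phi (\<lambda>l. \<Sum>i<l. (0::int)) m t" by (simp add: abs_mult)
  have B: "int (Suc m) * int h \<le> int (Suc m) * \<bar>t\<bar>" using ta by (intro mult_left_mono) auto
  have C: "int (Dfun n m) = int (Suc m) * int h" using n2 mn h unfolding Dfun_def by (simp add: algebra_simps)
  show "int (Dfun n m) \<le> phi (\<lambda>l. \<Sum>i<l. (0::int)) m t" unfolding C using order_trans[OF B A] .
qed

lemma far3:
  assumes n2: "2 \<le> n" and mn: "m \<le> n" and od: "odd n"
  shows "\<forall>t. t mod int n = int ((n + 1) div 2) mod int n \<longrightarrow>
     int (Dfun n m) \<le> phi (\<lambda>l. \<Sum>i<l. (if i + (m + 1) div 2 = m then 1 else (0::int))) m t"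
proof (intro allI impI)
  fix t :: int
  assume res: "t mod int n = int ((n + 1) div 2) mod int n"
  obtain h where h: "n = 2 * h + 1" using od by (metis oddE)
  define c where "c = (m + 1) div 2"
  have cm: "c \<le> m" unfolding c_def by simp
  have rh: "int ((n + 1) div 2) = int h + 1" using h by simp
  have "(int h + 1 - int n) mod int n = (int h + 1) mod int n" by simp
  then have "t mod int n = (int h + 1 - int n) mod int n" using res rh by simp
  then have tt: "t \<le> - int h \<or> int h + 1 \<le> t" using res_split[of t n "int h + 1 - int n"] n2 h by auto
  have lb: "\<bar>int (Suc m) * t - int c\<bar> \<le> phi (\<lambda>l. \<Sum>i<l. (if i + (m + 1) div 2 = m then 1 else (0::int))) m t"
    using phi_sum_lb[of m t "\<lambda>l. \<Sum>i<l. (if i + (m + 1) div 2 = m then 1 else (0::int))"]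
      sum_split_walk[OF cm] unfolding c_def by simp
  have D2: "2 * int (Dfun n m) \<le> 2 * int c + 2 * int h * int (Suc m)"
  proof -
    have Dv: "Dfun n m = n * (m + 1) div 2" using n2 mn unfolding Dfun_def by simp
    consider "m + 1 = 2 * c" | "m + 1 = 2 * c + 1" unfolding c_def by arith
    then show ?thesis
    proof cases
      case 1
      then have "n * (m + 1) div 2 = n * c" by simp
      then show ?thesis using Dv h 1 by (simp add: algebra_simps)
    next
      case 2
      then have "n * (m + 1) = 2 * (2 * h * c + h + c) + 1" using h by (simp add: algebra_simps)
      then have "n * (m + 1) div 2 = 2 * h * c + h + c" by presburger
      then show ?thesis using Dv h 2 by (simp add: algebra_simps)
    qed
  qed
  have c2: "2 * int c \<le> int (Suc m)" unfolding c_def by simp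
  show "int (Dfun n m) \<le> phi (\<lambda>l. \<Sum>i<l. (if i + (m + 1) div 2 = m then 1 else (0::int))) m t"
  proof (cases "t \<le> - int h")
    case True
    have "int (Suc m) * t \<le> int (Suc m) * (- int h)" using True by (intro mult_left_mono) auto
    then have "int c + int h * int (Suc m) \<le> \<bar>int (Suc m) * t - int c\<bar>" by (simp add: algebra_simps)
    then show ?thesis using lb D2 by linarith
  next
    case False
    then have t1: "int h + 1 \<le> t" using tt by simp
    have "int (Suc m) * (int h + 1) \<le> int (Suc m) * t" using t1 by (intro mult_left_mono) auto
    then have "int (Suc m) * (int h + 1) - int c \<le> \<bar>int (Suc m) * t - int c\<bar>"
      using abs_ge_self[of "int (Suc m) * t - int c"] by linarith
    moreover have "2 * (int c + int h * int (Suc m)) \<le> 2 * (int (Suc m) * (int h + 1) - int c)"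
      using c2 by (simp add: algebra_simps)
    ultimately show ?thesis using lb D2 by (simp add: algebra_simps)
  qed
qed

lemma far4:
  assumes n2: "2 \<le> n" and mn: "n < m" and ca: "even (m - n) \<or> n \<le> (m + 2) div 2"
  shows "\<forall>t. t mod int n = int ((m - n + 1) div 2) mod int n \<longrightarrow> int (Dfun n m) \<le> phi (\<lambda>l. \<Sum>i<l. (1::int)) m t"
proof (intro allI impI)
  fix t :: int
  assume res: "t mod int n = int ((m - n + 1) div 2) mod int n"
  define P where "P = (m - n + 1) div 2"
  have f1: "2 * P \<le> m - n + 1" "m - n + 1 \<le> 2 * P + 1" unfolding P_def by simp_all
  have P2: "2 * P \<le> m" using f1 n2 mn by linarith
  have Pn: "m \<le> 2 * P + n" using f1 mn by linarith
  have "t \<le> int P \<or> int P + int n \<le> t" using res_split[of t n "int P"] res n2 unfolding P_def by simp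
  then have tt: "t \<le> int P \<or> int m - int P \<le> t" using Pn by linarith
  have "int (tri P) + int (tri (m - P)) \<le> phi (\<lambda>l. \<Sum>i<l. (1::int)) m t" by (rule far_spread[OF P2 tt])
  moreover have "Dfun n m = tri (m - P) + tri P"
  proof -
    have "(m + n) div 2 = m - P" using f1 mn by linarith
    then show ?thesis using n2 mn ca unfolding Dfun_def P_def by (simp add: Let_def)
  qed
  ultimately show "int (Dfun n m) \<le> phi (\<lambda>l. \<Sum>i<l. (1::int)) m t" by simp
qed

lemma far5:
  assumes n2: "2 \<le> n" and mn: "n < m" and cb: "\<not> (even (m - n) \<or> n \<le> (m + 2) div 2)"
  shows "\<forall>t. t mod int n = int ((m - n) div 2) mod int n \<longrightarrow>
     int (Dfun n m) \<le> phi (\<lambda>l. \<Sum>i<l. (if i = m div 2 then 0 else (1::int))) m t"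
proof (intro allI impI)
  fix t :: int
  assume res: "t mod int n = int ((m - n) div 2) mod int n"
  define k where "k = m div 2"
  define R where "R = (m - n) div 2"
  have od: "odd (m - n)" using cb by simp
  have mR: "m = n + 2 * R + 1" unfolding R_def using od mn by presburger
  have km: "k < m" unfolding k_def using mn by simp
  define d where "d = m - Suc k"
  have md: "m = Suc k + d" unfolding d_def using km by simp
  have s_eq: "(\<lambda>l. \<Sum>i<l. (if i = m div 2 then 0 else (1::int))) = (\<lambda>l. int l - of_bool (k < l))"
    unfolding k_def by (rule ext) (rule sum_3b)
  have ph: "phi (\<lambda>l. \<Sum>i<l. (if i = m div 2 then 0 else (1::int))) m t = (\<Sum>i\<le>m - 1. \<bar>t - int i\<bar>) + \<bar>t - int k\<bar>"
  proof -
    have A: "phi (\<lambda>l. int l - of_bool (k < l)) (Suc k + d) t = (\<Sum>i\<le>k + d. \<bar>t - int i\<bar>) + \<bar>t - int k\<bar>"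
      by (rule phi_3b)
    have B: "Suc k + d = m" using md by simp
    have C: "k + d = m - 1" using md by simp
    from A have "phi (\<lambda>l. int l - of_bool (k < l)) m t = (\<Sum>i\<le>m - 1. \<bar>t - int i\<bar>) + \<bar>t - int k\<bar>"
      unfolding B C .
    then show ?thesis by (simp only: s_eq)
  qed
  have tt: "t \<le> int R \<or> int R + int n \<le> t" using res_split[of t n "int R"] res n2 unfolding R_def by simp
  have R2: "2 * R \<le> m - 1" using mR by simp
  have tt': "t \<le> int R \<or> int (m - 1) - int R \<le> t" using tt mR by auto
  have sp: "int R * (int R + 1) + (int (m - 1) - int R) * (int (m - 1) - int R + 1) \<le> 2 * (\<Sum>i\<le>m - 1. \<bar>t - int i\<bar>)"
    by (rule spread_lb[OF R2 tt'])
  have k2: "2 * int R + int n \<le> 2 * int k" unfolding k_def using mR by simp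
  have kR: "int k \<le> int R + int n" unfolding k_def using mR by simp
  have tk: "int R + int n - int k \<le> \<bar>t - int k\<bar>" using tt k2 kR by auto
  have X: "(m + 2) div 2 = k + 1" unfolding k_def by simp
  have Xn: "k + 1 < n" using cb X by simp
  have D: "Dfun n m = tri (R + n) + tri (R + 1) + n - (k + 1)"
  proof -
    have "(m + n) div 2 = R + n" "(m - n + 1) div 2 = R + 1" using mR by simp_all
    then show ?thesis using n2 mn cb X unfolding Dfun_def by (simp add: Let_def)
  qed
  have D2: "2 * int (Dfun n m) = (int R + int n) * (int R + int n + 1) + (int R + 1) * (int R + 2) + 2 * int n - 2 * int k - 2"
    using D Xn tri2[of "R + n"] tri2[of "R + 1"] by (simp add: algebra_simps)
  have mm: "int (m - 1) - int R = int R + int n" using mR by simp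
  have "2 * int (Dfun n m) \<le> 2 * phi (\<lambda>l. \<Sum>i<l. (if i = m div 2 then 0 else (1::int))) m t"
    using sp tk D2 mm unfolding ph by (simp add: algebra_simps)
  then show "int (Dfun n m) \<le> phi (\<lambda>l. \<Sum>i<l. (if i = m div 2 then 0 else (1::int))) m t" by simp
qed

lemma far:
  assumes n1: "1 \<le> n"
  shows "\<exists>g r. (\<forall>i. g i = 0 \<or> g i = (1::int)) \<and>
           (\<forall>t. t mod int n = r mod int n \<longrightarrow> int (Dfun n m) \<le> phi (\<lambda>l. \<Sum>i<l. g i) m t)"
proof (cases "n = 1")
  case True
  then show ?thesis using far1[of m] by (intro exI[of _ "\<lambda>_. 1"] exI[of _ 0]) auto
next
  case False
  then have n2: "2 \<le> n" using n1 by simp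
  show ?thesis
  proof (cases "m \<le> n")
    case mn: True
    show ?thesis
    proof (cases "even n")
      case True
      then show ?thesis using far2[OF n2 mn True] by (intro exI[of _ "\<lambda>_. 0"] exI[of _ "int (n div 2)"]) auto
    next
      case False
      then show ?thesis using far3[OF n2 mn False]
        by (intro exI[of _ "\<lambda>i. if i + (m + 1) div 2 = m then 1 else 0"] exI[of _ "int ((n + 1) div 2)"]) auto
    qed
  next
    case False
    then have mn: "n < m" by simp
    show ?thesis
    proof (cases "even (m - n) \<or> n \<le> (m + 2) div 2")
      case True
      then show ?thesis using far4[OF n2 mn True] by (intro exI[of _ "\<lambda>_. 1"] exI[of _ "int ((m - n + 1) div 2)"]) auto
    next
      case False
      then show ?thesis using far5[OF n2 mn False]
        by (intro exI[of _ "\<lambda>i. if i = m div 2 then 0 else 1"] exI[of _ "int ((m - n) div 2)"]) auto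
    qed
  qed
qed

lemma diam_lower:
  assumes n1: "1 \<le> n"
  shows "\<exists>u0\<in>yoke_vertices n m. \<exists>v0\<in>yoke_vertices n m. enat (Dfun n m) \<le> yoke_dist n m u0 v0"
proof -
  obtain g r where g: "\<forall>i. g i = 0 \<or> g i = (1::int)"
    and lb: "\<forall>t. t mod int n = r mod int n \<longrightarrow> int (Dfun n m) \<le> phi (\<lambda>l. \<Sum>i<l. g i) m t"
    using far[OF n1] by blast
  define u0 where "u0 = mk n (r mod int n) (replicate m 0)"
  define v0 where "v0 = mk n 0 (map g [0..<m])"
  have U: "u0 \<in> yoke_vertices n m" unfolding u0_def using n1 by (intro mk_vert) auto
  have V: "v0 \<in> yoke_vertices n m" unfolding v0_def using n1 g by (intro mk_vert) auto
  have S: "phi (Ssum u0 v0) m t = phi (\<lambda>l. \<Sum>i<l. g i) m t" for t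
    unfolding u0_def v0_def by (rule phi_restrict) (rule Ssum_mk)
  have r0: "(u0 ! 0 - v0 ! 0) mod int n = r mod int n" unfolding u0_def v0_def by (simp add: mk_0)
  have "enat (Dfun n m) \<le> yoke_dist n m u0 v0"
    unfolding yoke_dist_def
  proof (rule INF_greatest)
    fix k assume "k \<in> {k. (u0, v0) \<in> yoke_edges n m ^^ k}"
    then obtain t where t: "t mod int n = (u0 ! 0 - v0 ! 0) mod int n" "phi (Ssum u0 v0) m t \<le> int k"
      using dist_lb by blast
    have "int (Dfun n m) \<le> int k" using lb t r0 S by fastforce
    then show "enat (Dfun n m) \<le> enat k" by simp
  qed
  then show ?thesis using U V by blast
qed

lemma diam_upper:
  assumes n1: "1 \<le> n" and U: "u \<in> yoke_vertices n m" and V: "v \<in> yoke_vertices n m"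
  shows "yoke_dist n m u v \<le> enat (Dfun n m)"
proof -
  obtain t where t: "t mod int n = (u ! 0 - v ! 0) mod int n" "phi (Ssum u v) m t \<le> int (Dfun n m)"
    using comb_upper[OF Ssum_walk[OF U V] n1] by blast
  obtain k where k: "int k \<le> phi (Ssum u v) m t" "(u, v) \<in> yoke_edges n m ^^ k"
    using dist_ub[OF U V n1 t(1)] by blast
  have "yoke_dist n m u v \<le> enat k" unfolding yoke_dist_def using k(2) by (intro INF_lower) simp
  also have "enat k \<le> enat (Dfun n m)" using k(1) t(2) by simp
  finally show ?thesis .
qed

lemma diam_eq:
  assumes n1: "1 \<le> n"
  shows "yoke_diam n m = enat (Dfun n m)"
proof (rule antisym)
  show "yoke_diam n m \<le> enat (Dfun n m)"
    unfolding yoke_diam_def by (intro SUP_least diam_upper[OF n1])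
next
  obtain u0 v0 where uv: "u0 \<in> yoke_vertices n m" "v0 \<in> yoke_vertices n m" "enat (Dfun n m) \<le> yoke_dist n m u0 v0"
    using diam_lower[OF n1] by blast
  show "enat (Dfun n m) \<le> yoke_diam n m"
    unfolding yoke_diam_def using uv by (meson SUP_upper2)
qed

lemma choose_tri: "(k + 1) choose 2 = tri k"
  unfolding tri_def choose_two by (simp add: mult.commute)

theorem mainTheorem1:
  fixes n m :: nat
  assumes "n \<ge> 1"
  shows "(n = 1 \<longrightarrow> yoke_diam n m =
            enat ((((m + 1) div 2 + 1) choose 2) + ((m div 2 + 1) choose 2)))
       \<and> (m \<le> n \<longrightarrow> yoke_diam n m = enat (n * (m + 1) div 2))
       \<and> (2 \<le> n \<and> n \<le> m \<longrightarrow>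
            (let d0 = (((m + n) div 2 + 1) choose 2) + (((m - n + 1) div 2 + 1) choose 2) in
              (if even (m - n) \<or> n \<le> (m + 2) div 2
               then yoke_diam n m = enat d0
               else yoke_diam n m = enat (d0 + n - (m + 2) div 2))))"
proof -
  have D: "yoke_diam n m = enat (Dfun n m)" using diam_eq assms by blast
  have c1: "n = 1 \<longrightarrow> yoke_diam n m = enat ((((m + 1) div 2 + 1) choose 2) + ((m div 2 + 1) choose 2))"
  proof
    assume h: "n = 1"
    show "yoke_diam n m = enat ((((m + 1) div 2 + 1) choose 2) + ((m div 2 + 1) choose 2))"
      using D h unfolding Dfun_def choose_tri by simp
  qed
  have c2: "m \<le> n \<longrightarrow> yoke_diam n m = enat (n * (m + 1) div 2)"
  proof
    assume mn: "m \<le> n"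
    show "yoke_diam n m = enat (n * (m + 1) div 2)"
    proof (cases "n = 1")
      case True
      then have "m = 0 \<or> m = 1" using mn by auto
      then show ?thesis using D True unfolding Dfun_def tri_def by auto
    next
      case False
      then show ?thesis using D mn unfolding Dfun_def by simp
    qed
  qed
  have c3: "2 \<le> n \<and> n \<le> m \<longrightarrow>
            (let d0 = (((m + n) div 2 + 1) choose 2) + (((m - n + 1) div 2 + 1) choose 2) in
              (if even (m - n) \<or> n \<le> (m + 2) div 2
               then yoke_diam n m = enat d0
               else yoke_diam n m = enat (d0 + n - (m + 2) div 2)))"
  proof
    assume nm: "2 \<le> n \<and> n \<le> m"
    show "let d0 = (((m + n) div 2 + 1) choose 2) + (((m - n + 1) div 2 + 1) choose 2) in
              (if even (m - n) \<or> n \<le> (m + 2) div 2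
               then yoke_diam n m = enat d0
               else yoke_diam n m = enat (d0 + n - (m + 2) div 2))"
    proof (cases "m = n")
      case True
      have "(m + n) div 2 = n" "(m - n + 1) div 2 = 0" using True by simp_all
      then show ?thesis using D True nm unfolding Dfun_def choose_tri Let_def by (simp add: tri_def)
    next
      case False
      then have "n < m" using nm by simp
      then show ?thesis using D nm unfolding Dfun_def choose_tri Let_def by simp
    qed
  qed
  show ?thesis using c1 c2 c3 by blast
qed


end
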